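(* Let $D$ and $E$ be finite sets with $|D|,|E|\ge 2$, let $P:D\times E\to\{0,1\}$ be a binary predicate, and let $0<\varepsilon<1$. (1) If there exist a two-element subset $B\subseteq D$ and a two-element subset $C\subseteq E$ such that $P|_{B\times C}$ is a singleton, then there exists an instance $I$ of $\mathrm{CSP}(P)$ such that every $\varepsilon$-sparsifier of $I$ has $\Omega(n^2)$ constraints, where $n$ is the number of variables of $I$ (i.e., there is a constant $c>0$ such that for infinitely many $n$ there is such an instance on $n$ variables with all $\varepsilon$-sparsifiers having at least $cn^2$ constraints). (2) Otherwise, for every instance $I$ of $\mathrm{CSP}(P)$ on $n$ variables there exists an $\varepsilon$-sparsifier of $I$ with $O(\varepsilon^{-2}n)$ constraints, where the implied constant does not depend on $I$, $n$ or $\varepsilon$.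
   Context: An instance of $\mathrm{CSP}(P)$ for $P:D\times E\to\{0,1\}$ is $I=(V,\Pi,w)$ with $V$ a finite set of $n=|V|$ variables, $\Pi$ a set of constraints $\langle(u,v),P\rangle$ with $u,v\in V$ distinct, and $w:\Pi\to\mathbb{R}_{>0}$. An assignment $A:V\to D\cup E$ is valid if each variable receives a label lying in the intersection of the domains of the constraint positions it occupies: $A(u)\in D$ whenever $u$ is the first variable of some constraint and $A(v)\in E$ whenever $v$ is the second variable of some constraint. $\mathrm{Val}_I(A)=\sum_{\pi=\langle(u,v),P\rangle\in\Pi}w(\pi)P(A(u),A(v))$. An $\varepsilon$-sparsifier of $I$ is $I_\varepsilon=(V,\Pi_\varepsilon,w_\varepsilon)$ with $\Pi_\varepsilon\subseteq\Pi$, $w_\varepsilon:\Pi_\varepsilon\to\mathbb{R}_{>0}$, such that for every valid assignment $A$ of $I$, $(1-\varepsilon)\mathrm{Val}_I(A)\le\mathrm{Val}_{I_\varepsilon}(A)\le(1+\varepsilon)\mathrm{Val}_I(A)$; its number of constraints is $|\Pi_\varepsilon|$. A predicate is a singleton if exactly one tuple is mapped to $1$; $P|_{B\times C}$ is the restriction of $P$ to $B\times C$. *)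

theory Defs
  imports Complex_Main
begin

text \<open>Since the predicate P is fixed, a constraint is identified with its ordered pair of
  (distinct) variables (u,v); an instance is (V, Cs, w) with Cs a set of such pairs.
  The predicate P : D x E -> {0,1} is a boolean function on a common label type 'a;
  its values outside D x E never matter for valid assignments.\<close>

definition csp_instance :: "'v set \<Rightarrow> ('v \<times> 'v) set \<Rightarrow> ('v \<times> 'v \<Rightarrow> real) \<Rightarrow> bool" where
  "csp_instance V Cs w \<longleftrightarrow> finite V \<and> Cs \<subseteq> {(u, v). u \<in> V \<and> v \<in> V \<and> u \<noteq> v}
     \<and> (\<forall>c\<in>Cs. w c > 0)"

definition valid_assignment :: "'a set \<Rightarrow> 'a set \<Rightarrow> 'v set \<Rightarrow> ('v \<times> 'v) set \<Rightarrow> ('v \<Rightarrow> 'a) \<Rightarrow> bool" where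
  "valid_assignment D E V Cs A \<longleftrightarrow> (\<forall>v\<in>V. A v \<in> D \<union> E)
     \<and> (\<forall>(u, v)\<in>Cs. A u \<in> D \<and> A v \<in> E)"

definition csp_val :: "('a \<Rightarrow> 'a \<Rightarrow> bool) \<Rightarrow> ('v \<times> 'v) set \<Rightarrow> ('v \<times> 'v \<Rightarrow> real) \<Rightarrow> ('v \<Rightarrow> 'a) \<Rightarrow> real" where
  "csp_val P Cs w A = (\<Sum>(u, v)\<in>Cs. w (u, v) * (if P (A u) (A v) then 1 else 0))"

definition is_sparsifier ::
  "'a set \<Rightarrow> 'a set \<Rightarrow> ('a \<Rightarrow> 'a \<Rightarrow> bool) \<Rightarrow> real \<Rightarrow> 'v set \<Rightarrow> ('v \<times> 'v) set \<Rightarrow> ('v \<times> 'v \<Rightarrow> real)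
    \<Rightarrow> ('v \<times> 'v) set \<Rightarrow> ('v \<times> 'v \<Rightarrow> real) \<Rightarrow> bool" where
  "is_sparsifier D E P \<epsilon> V Cs w Cs' w' \<longleftrightarrow> Cs' \<subseteq> Cs \<and> (\<forall>c\<in>Cs'. w' c > 0)
     \<and> (\<forall>A. valid_assignment D E V Cs A \<longrightarrow>
          (1 - \<epsilon>) * csp_val P Cs w A \<le> csp_val P Cs' w' A
        \<and> csp_val P Cs' w' A \<le> (1 + \<epsilon>) * csp_val P Cs w A)"

definition has_singleton_2x2 :: "'a set \<Rightarrow> 'a set \<Rightarrow> ('a \<Rightarrow> 'a \<Rightarrow> bool) \<Rightarrow> bool" where
  "has_singleton_2x2 D E P \<longleftrightarrow> (\<exists>B C. B \<subseteq> D \<and> card B = 2 \<and> C \<subseteq> E \<and> card C = 2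
     \<and> card {(b, c). b \<in> B \<and> c \<in> C \<and> P b c} = 1)"

end

theory Submission
  imports Defs "Jordan_Normal_Form.Determinant" "Jordan_Normal_Form.Gauss_Jordan_Elimination"
begin

definition opr :: "real vec \<Rightarrow> real vec \<Rightarrow> real mat" where
  "opr x y = mat (dim_vec x) (dim_vec y) (\<lambda>(i,j). x$i * y$j)"

definition tr :: "real mat \<Rightarrow> real" where
  "tr A = (\<Sum>i<dim_row A. A$$(i,i))"

definition qf :: "real mat \<Rightarrow> real vec \<Rightarrow> real" where
  "qf A x = x \<bullet> (A *\<^sub>v x)"

definition pd :: "nat \<Rightarrow> real mat \<Rightarrow> bool" where
  "pd n A \<longleftrightarrow> A \<in> carrier_mat n n \<and> transpose_mat A = A \<and>
     (\<forall>x\<in>carrier_vec n. x \<noteq> 0\<^sub>v n \<longrightarrow> qf A x > 0)"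

definition psd :: "nat \<Rightarrow> real mat \<Rightarrow> bool" where
  "psd n A \<longleftrightarrow> A \<in> carrier_mat n n \<and> transpose_mat A = A \<and>
     (\<forall>x\<in>carrier_vec n. qf A x \<ge> 0)"

definition minv :: "real mat \<Rightarrow> real mat" where
  "minv A = (case mat_inverse A of Some B \<Rightarrow> B | None \<Rightarrow> A)"

lemma opr_carrier[simp]: "x \<in> carrier_vec n \<Longrightarrow> y \<in> carrier_vec m \<Longrightarrow> opr x y \<in> carrier_mat n m"
  unfolding opr_def by auto

lemma pd_psd: "pd n A \<Longrightarrow> psd n A"
proof -
  assume a: "pd n A"
  have "qf A x \<ge> 0" if x: "x \<in> carrier_vec n" for x
  proof (cases "x = 0\<^sub>v n")
    case True then show ?thesis using a scalar_prod_left_zero[of "A *\<^sub>v 0\<^sub>v n" n] unfolding qf_def pd_def by auto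
  next
    case False then show ?thesis using a x unfolding pd_def by force
  qed
  then show ?thesis using a unfolding pd_def psd_def by auto
qed

lemma sym_bilin:
  fixes A :: "real mat"
  assumes A: "A \<in> carrier_mat n n" and s: "transpose_mat A = A"
    and x: "x \<in> carrier_vec n" and y: "y \<in> carrier_vec n"
  shows "x \<bullet> (A *\<^sub>v y) = y \<bullet> (A *\<^sub>v x)"
proof -
  have "(transpose_mat A *\<^sub>v x) \<bullet> y = x \<bullet> (A *\<^sub>v y)"
    by (rule transpose_vec_mult_scalar[OF A y x])
  then have "(A *\<^sub>v x) \<bullet> y = x \<bullet> (A *\<^sub>v y)" using s by simp
  moreover have "(A *\<^sub>v x) \<bullet> y = y \<bullet> (A *\<^sub>v x)"
    by (rule comm_scalar_prod[of _ n], insert A x y, auto)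
  ultimately show ?thesis by simp
qed

lemma transpose_bilin:
  fixes A :: "real mat"
  assumes A: "A \<in> carrier_mat n m" and x: "x \<in> carrier_vec n" and y: "y \<in> carrier_vec m"
  shows "x \<bullet> (A *\<^sub>v y) = (transpose_mat A *\<^sub>v x) \<bullet> y"
  using transpose_vec_mult_scalar[OF A y x] by simp

lemma pd_det: assumes "pd n A" shows "det A \<noteq> 0"
proof
  assume "det A = 0"
  with assms det_0_iff_vec_prod_zero_field[of A n] obtain v where
    v: "v \<in> carrier_vec n" "v \<noteq> 0\<^sub>v n" "A *\<^sub>v v = 0\<^sub>v n" unfolding pd_def by auto
  then have "qf A v = 0" unfolding qf_def by simp
  with assms v show False unfolding pd_def by fastforce
qed

lemma pd_minv:
  assumes "pd n A"
  shows "minv A \<in> carrier_mat n n" "A * minv A = 1\<^sub>m n" "minv A * A = 1\<^sub>m n"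
proof -
  have A: "A \<in> carrier_mat n n" using assms unfolding pd_def by auto
  have U: "A \<in> Units (ring_mat TYPE(real) n ())"
    by (rule det_non_zero_imp_unit[OF A pd_det[OF assms]])
  have "mat_inverse A \<noteq> None" using mat_inverse(1)[OF A, of "()"] U by auto
  then obtain B where B: "mat_inverse A = Some B" by auto
  then have "minv A = B" unfolding minv_def by simp
  with mat_inverse(2)[OF A B]
  show "minv A \<in> carrier_mat n n" "A * minv A = 1\<^sub>m n" "minv A * A = 1\<^sub>m n" by auto
qed

lemma minv_unique_right:
  assumes "pd n A" "B \<in> carrier_mat n n" "A * B = 1\<^sub>m n"
  shows "minv A = B"
proof -
  have A: "A \<in> carrier_mat n n" using assms unfolding pd_def by auto
  note m = pd_minv[OF assms(1)]
  have "minv A = minv A * (A * B)" using assms m by simp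
  also have "\<dots> = (minv A * A) * B" by (rule assoc_mult_mat[symmetric, OF m(1) A assms(2)])
  also have "\<dots> = B" using m assms by simp
  finally show ?thesis .
qed

lemma minv_unique_left:
  assumes "pd n A" "B \<in> carrier_mat n n" "B * A = 1\<^sub>m n"
  shows "minv A = B"
proof -
  have A: "A \<in> carrier_mat n n" using assms unfolding pd_def by auto
  have "A * B = 1\<^sub>m n" using mat_mult_left_right_inverse[OF assms(2) A assms(3)] .
  then show ?thesis using minv_unique_right assms by blast
qed

lemma minv_sym:
  assumes "pd n A" shows "transpose_mat (minv A) = minv A"
proof -
  have A: "A \<in> carrier_mat n n" and s: "transpose_mat A = A" using assms unfolding pd_def by auto
  note m = pd_minv[OF assms]
  have "transpose_mat (A * minv A) = transpose_mat (minv A) * transpose_mat A"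
    by (rule transpose_mult[OF A m(1)])
  then have "transpose_mat (minv A) * A = 1\<^sub>m n" using m s by simp
  then have "minv A = transpose_mat (minv A)"
    by (intro minv_unique_left[OF assms]) (use m in auto)
  then show ?thesis by simp
qed

lemma minv_pd:
  assumes "pd n A" shows "pd n (minv A)"
proof -
  have A: "A \<in> carrier_mat n n" and s: "transpose_mat A = A" using assms unfolding pd_def by auto
  note m = pd_minv[OF assms]
  have "qf (minv A) x > 0" if x: "x \<in> carrier_vec n" "x \<noteq> 0\<^sub>v n" for x
  proof -
    define y where "y = minv A *\<^sub>v x"
    have y: "y \<in> carrier_vec n" unfolding y_def using m x by simp
    have Ay: "A *\<^sub>v y = x" unfolding y_def using m x A
      by (metis assoc_mult_mat_vec one_mult_mat_vec)
    have "y \<noteq> 0\<^sub>v n" using Ay x A by auto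
    then have "qf A y > 0" using assms y unfolding pd_def by auto
    moreover have "qf A y = y \<bullet> x" unfolding qf_def using Ay by simp
    moreover have "qf (minv A) x = x \<bullet> y" unfolding qf_def y_def by simp
    moreover have "x \<bullet> y = y \<bullet> x" using x y comm_scalar_prod by blast
    ultimately show ?thesis by simp
  qed
  then show ?thesis unfolding pd_def using m minv_sym[OF assms] by auto
qed

lemma cs_psd:
  assumes "psd n A" and x: "x \<in> carrier_vec n" and y: "y \<in> carrier_vec n"
  shows "(x \<bullet> (A *\<^sub>v y))^2 \<le> qf A x * qf A y"
proof -
  have A: "A \<in> carrier_mat n n" and s: "transpose_mat A = A" using assms unfolding psd_def by auto
  have sb: "y \<bullet> (A *\<^sub>v x) = x \<bullet> (A *\<^sub>v y)" using sym_bilin[OF A s y x] .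
  have exp: "qf A (x + t \<cdot>\<^sub>v y) = qf A x + 2 * t * (x \<bullet> (A *\<^sub>v y)) + t^2 * qf A y" for t
  proof -
    have c: "t \<cdot>\<^sub>v y \<in> carrier_vec n" using y by simp
    have "A *\<^sub>v (x + t \<cdot>\<^sub>v y) = A *\<^sub>v x + t \<cdot>\<^sub>v (A *\<^sub>v y)"
      using A x y by (simp add: mult_add_distrib_mat_vec mult_mat_vec)
    then have "qf A (x + t \<cdot>\<^sub>v y) = (x + t \<cdot>\<^sub>v y) \<bullet> (A *\<^sub>v x + t \<cdot>\<^sub>v (A *\<^sub>v y))"
      unfolding qf_def by simp
    also have "\<dots> = x \<bullet> (A *\<^sub>v x) + t * (x \<bullet> (A *\<^sub>v y)) + t * (y \<bullet> (A *\<^sub>v x)) + t * t * (y \<bullet> (A *\<^sub>v y))"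
      using A x y c
      by (simp add: add_scalar_prod_distrib[of _ n] scalar_prod_add_distrib[of _ n] algebra_simps)
    finally show ?thesis unfolding qf_def using sb by (simp add: power2_eq_square algebra_simps)
  qed
  have nn: "qf A (x + t \<cdot>\<^sub>v y) \<ge> 0" for t using assms x y unfolding psd_def by simp
  let ?a = "qf A y" and ?b = "x \<bullet> (A *\<^sub>v y)" and ?c = "qf A x"
  have a0: "?a \<ge> 0" using assms y unfolding psd_def by simp
  have c0: "?c \<ge> 0" using assms x unfolding psd_def by simp
  show ?thesis
  proof (cases "?a = 0")
    case True
    have "?b = 0"
    proof (rule ccontr)
      assume b: "?b \<noteq> 0"
      define t where "t = - (?c + 1) / (2 * ?b)"
      have "2 * t * ?b = - (?c + 1)" unfolding t_def using b by simp
      then have "qf A (x + t \<cdot>\<^sub>v y) = -1" using exp[of t] True by simp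
      with nn[of t] show False by simp
    qed
    then show ?thesis using True by simp
  next
    case False
    then have a: "?a > 0" using a0 by simp
    define t where "t = - ?b / ?a"
    have "qf A (x + t \<cdot>\<^sub>v y) = ?c - ?b^2 / ?a"
      using exp[of t] a unfolding t_def by (simp add: power2_eq_square field_simps)
    with nn[of t] have "?b^2 / ?a \<le> ?c" by simp
    then show ?thesis using a by (simp add: field_simps mult.commute)
  qed
qed

lemma tr_mult_comm:
  assumes A: "A \<in> carrier_mat n m" and B: "B \<in> carrier_mat m n"
  shows "tr (A * B) = tr (B * A)"
proof -
  have "tr (A * B) = (\<Sum>i<n. \<Sum>k<m. A$$(i,k) * B$$(k,i))"
    unfolding tr_def using A B by (simp add: scalar_prod_def row_def col_def atLeast0LessThan)
  also have "\<dots> = (\<Sum>k<m. \<Sum>i<n. B$$(k,i) * A$$(i,k))"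
    by (subst sum.swap) (simp add: mult.commute)
  also have "\<dots> = tr (B * A)"
    unfolding tr_def using A B by (simp add: scalar_prod_def row_def col_def atLeast0LessThan)
  finally show ?thesis .
qed

lemma tr_add: "A \<in> carrier_mat n n \<Longrightarrow> B \<in> carrier_mat n n \<Longrightarrow> tr (A + B) = tr A + tr B"
  unfolding tr_def by (simp add: sum.distrib)

lemma tr_minus: "A \<in> carrier_mat n n \<Longrightarrow> B \<in> carrier_mat n n \<Longrightarrow> tr (A - B) = tr A - tr B"
  unfolding tr_def by (simp add: sum_subtractf)

lemma tr_smult: "A \<in> carrier_mat n n \<Longrightarrow> tr (c \<cdot>\<^sub>m A) = c * tr A"
  unfolding tr_def by (simp add: sum_distrib_left)

lemma tr_one: "tr (1\<^sub>m n) = real n"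
  unfolding tr_def by simp

lemma tr_opr_mult:
  assumes x: "x \<in> carrier_vec n" and y: "y \<in> carrier_vec n" and A: "A \<in> carrier_mat n n"
  shows "tr (opr x y * A) = y \<bullet> (A *\<^sub>v x)"
proof -
  have "tr (opr x y * A) = (\<Sum>i<n. \<Sum>k<n. x$i * y$k * A$$(k,i))"
    unfolding tr_def opr_def using x y A
    by (simp add: scalar_prod_def row_def col_def atLeast0LessThan sum_distrib_left mult.assoc)
  also have "\<dots> = (\<Sum>k<n. y$k * (\<Sum>i<n. A$$(k,i) * x$i))"
    by (subst sum.swap) (simp add: sum_distrib_left algebra_simps)
  also have "\<dots> = y \<bullet> (A *\<^sub>v x)"
    using x y A by (simp add: scalar_prod_def row_def atLeast0LessThan)
  finally show ?thesis .
qed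

lemma mult_opr:
  assumes A: "A \<in> carrier_mat n m" and x: "x \<in> carrier_vec m" and y: "y \<in> carrier_vec k"
  shows "A * opr x y = opr (A *\<^sub>v x) y"
  unfolding opr_def using A x y
  by (intro eq_matI) (auto simp: scalar_prod_def row_def col_def sum_distrib_right mult.assoc)

lemma opr_mult:
  assumes A: "A \<in> carrier_mat m k" and x: "x \<in> carrier_vec n" and y: "y \<in> carrier_vec m"
  shows "opr x y * A = opr x (transpose_mat A *\<^sub>v y)"
  unfolding opr_def using A x y
  by (intro eq_matI) (auto simp: scalar_prod_def row_def col_def sum_distrib_left algebra_simps)

lemma opr_mult_vec:
  assumes x: "x \<in> carrier_vec n" and y: "y \<in> carrier_vec m" and z: "z \<in> carrier_vec m"
  shows "opr x y *\<^sub>v z = (y \<bullet> z) \<cdot>\<^sub>v x"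
  unfolding opr_def using x y z
  by (intro eq_vecI) (auto simp: scalar_prod_def row_def sum_distrib_left algebra_simps)

lemma opr_opr:
  assumes x: "x \<in> carrier_vec n" and y: "y \<in> carrier_vec m" and z: "z \<in> carrier_vec m"
    and w: "w \<in> carrier_vec k"
  shows "opr x y * opr z w = (y \<bullet> z) \<cdot>\<^sub>m opr x w"
  unfolding opr_def using x y z w
  by (intro eq_matI) (auto simp: scalar_prod_def row_def col_def sum_distrib_left sum_distrib_right algebra_simps)

lemma qf_opr:
  assumes b: "b \<in> carrier_vec n" and x: "x \<in> carrier_vec n"
  shows "qf (opr b b) x = (b \<bullet> x)^2"
  unfolding qf_def using opr_mult_vec[OF b b x] b x
  by (simp add: comm_scalar_prod[of x n b] power2_eq_square)

lemma cs_step: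
  fixes A a P Q p q :: real
  assumes "A^2 \<le> P * Q" "a^2 \<le> p * q" "P \<ge> 0" "Q \<ge> 0" "p \<ge> 0" "q \<ge> 0"
  shows "(A + a)^2 \<le> (P + p) * (Q + q)"
proof -
  have "(A * a)^2 \<le> (P * q) * (p * Q)"
  proof -
    have "(A * a)^2 = A^2 * a^2" by (simp add: power_mult_distrib)
    also have "\<dots> \<le> (P * Q) * (p * q)" using assms by (intro mult_mono) auto
    finally show ?thesis by (simp add: algebra_simps)
  qed
  then have "\<bar>A * a\<bar> \<le> sqrt ((P * q) * (p * Q))"
    using real_sqrt_abs real_sqrt_le_mono by metis
  also have "\<dots> = sqrt (P * q) * sqrt (p * Q)" by (simp add: real_sqrt_mult)
  also have "\<dots> \<le> (P * q + p * Q) / 2"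
  proof -
    have "0 \<le> (sqrt (P * q) - sqrt (p * Q))^2" by simp
    moreover have "(sqrt (P * q))^2 = P * q" "(sqrt (p * Q))^2 = p * Q" using assms by auto
    ultimately show ?thesis by (simp add: power2_eq_square algebra_simps)
  qed
  finally have h: "\<bar>A * a\<bar> \<le> (P * q + p * Q) / 2" .
  have "A * a \<le> (P * q + p * Q) / 2" using h abs_ge_self order_trans by blast
  then have "2 * (A * a) \<le> P * q + p * Q" by simp
  then show ?thesis using assms by (simp add: power2_eq_square algebra_simps)
qed

lemma sum_cs:
  fixes a p q :: "'j \<Rightarrow> real"
  assumes "finite J" "\<And>j. j \<in> J \<Longrightarrow> (a j)^2 \<le> p j * q j"
    "\<And>j. j \<in> J \<Longrightarrow> p j \<ge> 0" "\<And>j. j \<in> J \<Longrightarrow> q j \<ge> 0"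
  shows "(\<Sum>j\<in>J. a j)^2 \<le> (\<Sum>j\<in>J. p j) * (\<Sum>j\<in>J. q j)"
  using assms
proof (induction J rule: finite_induct)
  case empty then show ?case by simp
next
  case (insert x F)
  have "(a x + (\<Sum>j\<in>F. a j))^2 \<le> (p x + (\<Sum>j\<in>F. p j)) * (q x + (\<Sum>j\<in>F. q j))"
    by (rule cs_step) (use insert in \<open>auto intro: sum_nonneg\<close>)
  then show ?case using insert by simp
qed

locale bss =
  fixes n :: nat and J :: "'j set" and b :: "'j \<Rightarrow> real vec"
  assumes finJ: "finite J" and bc: "\<And>j. j \<in> J \<Longrightarrow> b j \<in> carrier_vec n"
    and Mpos: "\<And>x. x \<in> carrier_vec n \<Longrightarrow> x \<noteq> 0\<^sub>v n \<Longrightarrow> (\<Sum>j\<in>J. (b j \<bullet> x)^2) > 0"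
begin

definition W :: "('j \<Rightarrow> real) \<Rightarrow> real mat" where
  "W g = mat n n (\<lambda>(i,k). \<Sum>j\<in>J. g j * (b j $ i * b j $ k))"

abbreviation M where "M \<equiv> W (\<lambda>_. 1)"

definition Phi :: "('j \<Rightarrow> real) \<Rightarrow> real" where
  "Phi g = (\<Sum>j\<in>J. b j \<bullet> (minv (W g) *\<^sub>v b j))"

lemma W_carrier[simp]: "W g \<in> carrier_mat n n"
  unfolding W_def by simp

lemma W_dims[simp]: "dim_row (W g) = n" "dim_col (W g) = n"
  unfolding W_def by auto

lemma W_sym: "transpose_mat (W g) = W g"
  unfolding W_def by (intro eq_matI) (auto simp: mult.commute)

lemma dot_b: "j \<in> J \<Longrightarrow> x \<in> carrier_vec n \<Longrightarrow> b j \<bullet> x = (\<Sum>k<n. b j $ k * x $ k)"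
  using bc by (simp add: scalar_prod_def atLeast0LessThan)

lemma W_mult_vec:
  assumes x: "x \<in> carrier_vec n"
  shows "W g *\<^sub>v x = vec n (\<lambda>i. \<Sum>j\<in>J. g j * (b j \<bullet> x) * b j $ i)"
proof (rule eq_vecI)
  fix i assume "i < dim_vec (vec n (\<lambda>i. \<Sum>j\<in>J. g j * (b j \<bullet> x) * b j $ i))"
  then have i: "i < n" by simp
  have "(W g *\<^sub>v x) $ i = (\<Sum>k<n. (\<Sum>j\<in>J. g j * (b j $ i * b j $ k)) * x $ k)"
    using i x unfolding W_def by (simp add: scalar_prod_def row_def atLeast0LessThan)
  also have "\<dots> = (\<Sum>k<n. \<Sum>j\<in>J. g j * b j $ i * (b j $ k * x $ k))"
    by (simp add: sum_distrib_right mult.assoc)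
  also have "\<dots> = (\<Sum>j\<in>J. \<Sum>k<n. g j * b j $ i * (b j $ k * x $ k))"
    by (rule sum.swap)
  also have "\<dots> = (\<Sum>j\<in>J. g j * (b j \<bullet> x) * b j $ i)"
    by (rule sum.cong) (auto simp: dot_b[OF _ x] sum_distrib_left[symmetric])
  finally show "(W g *\<^sub>v x) $ i = vec n (\<lambda>i. \<Sum>j\<in>J. g j * (b j \<bullet> x) * b j $ i) $ i"
    using i by simp
qed simp

lemma W_dot:
  assumes x: "x \<in> carrier_vec n" and y: "y \<in> carrier_vec n"
  shows "y \<bullet> (W g *\<^sub>v x) = (\<Sum>j\<in>J. g j * (b j \<bullet> x) * (b j \<bullet> y))"
proof -
  have "y \<bullet> (W g *\<^sub>v x) = (\<Sum>i<n. y $ i * (\<Sum>j\<in>J. g j * (b j \<bullet> x) * b j $ i))"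
    using x y by (simp add: W_mult_vec scalar_prod_def atLeast0LessThan)
  also have "\<dots> = (\<Sum>i<n. \<Sum>j\<in>J. g j * (b j \<bullet> x) * (b j $ i * y $ i))"
    by (simp add: sum_distrib_left algebra_simps)
  also have "\<dots> = (\<Sum>j\<in>J. \<Sum>i<n. g j * (b j \<bullet> x) * (b j $ i * y $ i))"
    by (rule sum.swap)
  also have "\<dots> = (\<Sum>j\<in>J. g j * (b j \<bullet> x) * (b j \<bullet> y))"
    by (rule sum.cong) (auto simp: dot_b[OF _ y] sum_distrib_left[symmetric])
  finally show ?thesis .
qed

lemma qf_W: "x \<in> carrier_vec n \<Longrightarrow> qf (W g) x = (\<Sum>j\<in>J. g j * (b j \<bullet> x)^2)"
  unfolding qf_def by (simp add: W_dot power2_eq_square mult.assoc)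

lemma W_lin:
  assumes x: "x \<in> carrier_vec n"
  shows "W (\<lambda>j. g j + c * h j) *\<^sub>v x = W g *\<^sub>v x + c \<cdot>\<^sub>v (W h *\<^sub>v x)"
  using x by (intro eq_vecI) (auto simp: W_mult_vec sum.distrib sum_distrib_left algebra_simps)

lemma W_upd:
  assumes x: "x \<in> carrier_vec n" and i: "i \<in> J"
  shows "W (g(i := g i + s)) *\<^sub>v x = W g *\<^sub>v x + (s * (b i \<bullet> x)) \<cdot>\<^sub>v b i"
proof -
  have d: "(\<Sum>j\<in>J. (if j = i then g i + s else g j) * (b j \<bullet> x) * b j $ k) =
     (\<Sum>j\<in>J. g j * (b j \<bullet> x) * b j $ k) + s * (b i \<bullet> x) * b i $ k" for k
  proof -
    have "(\<Sum>j\<in>J. (if j = i then g i + s else g j) * (b j \<bullet> x) * b j $ k) =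
      (\<Sum>j\<in>J. g j * (b j \<bullet> x) * b j $ k + (if j = i then s * (b i \<bullet> x) * b i $ k else 0))"
      by (rule sum.cong) (auto simp: algebra_simps)
    also have "\<dots> = (\<Sum>j\<in>J. g j * (b j \<bullet> x) * b j $ k) + s * (b i \<bullet> x) * b i $ k"
      using i finJ by (simp add: sum.distrib)
    finally show ?thesis .
  qed
  show ?thesis using x bc[OF i] by (intro eq_vecI) (auto simp: W_mult_vec d)
qed

lemma W_const: "x \<in> carrier_vec n \<Longrightarrow> W (\<lambda>_. c) *\<^sub>v x = c \<cdot>\<^sub>v (M *\<^sub>v x)"
  by (intro eq_vecI) (auto simp: W_mult_vec sum_distrib_left algebra_simps)

lemma tr_W:
  assumes N: "N \<in> carrier_mat n n"
  shows "tr (N * W g) = (\<Sum>j\<in>J. g j * (b j \<bullet> (N *\<^sub>v b j)))"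
proof -
  have "tr (N * W g) = (\<Sum>i<n. \<Sum>k<n. N $$ (i,k) * (\<Sum>j\<in>J. g j * (b j $ k * b j $ i)))"
    unfolding tr_def using N by (simp add: W_def scalar_prod_def row_def col_def atLeast0LessThan)
  also have "\<dots> = (\<Sum>i<n. \<Sum>k<n. \<Sum>j\<in>J. g j * (b j $ i * (N $$ (i,k) * b j $ k)))"
    by (simp add: sum_distrib_left algebra_simps)
  also have "\<dots> = (\<Sum>i<n. \<Sum>j\<in>J. \<Sum>k<n. g j * (b j $ i * (N $$ (i,k) * b j $ k)))"
    by (simp add: sum.swap[of _ "{..<n}" J])
  also have "\<dots> = (\<Sum>j\<in>J. \<Sum>i<n. \<Sum>k<n. g j * (b j $ i * (N $$ (i,k) * b j $ k)))"
    by (rule sum.swap)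
  also have "\<dots> = (\<Sum>j\<in>J. g j * (b j \<bullet> (N *\<^sub>v b j)))"
  proof (rule sum.cong)
    fix j assume j: "j \<in> J"
    have "b j \<bullet> (N *\<^sub>v b j) = (\<Sum>i<n. b j $ i * (\<Sum>k<n. N $$ (i,k) * b j $ k))"
      using N bc[OF j] by (simp add: scalar_prod_def row_def atLeast0LessThan)
    then show "(\<Sum>i<n. \<Sum>k<n. g j * (b j $ i * (N $$ (i,k) * b j $ k))) = g j * (b j \<bullet> (N *\<^sub>v b j))"
      by (simp add: sum_distrib_left)
  qed simp
  finally show ?thesis .
qed

lemma M_pd: "pd n M"
  unfolding pd_def using Mpos by (auto simp: W_sym qf_W)

lemma inv_left: "pd n (W g) \<Longrightarrow> x \<in> carrier_vec n \<Longrightarrow> minv (W g) *\<^sub>v (W g *\<^sub>v x) = x"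
  using pd_minv[of n "W g"]
  by (metis W_carrier assoc_mult_mat_vec one_mult_mat_vec)

lemma inv_right: "pd n (W g) \<Longrightarrow> x \<in> carrier_vec n \<Longrightarrow> W g *\<^sub>v (minv (W g) *\<^sub>v x) = x"
  using pd_minv[of n "W g"]
  by (metis W_carrier assoc_mult_mat_vec one_mult_mat_vec)

lemma inv_carrier[simp]: "pd n (W g) \<Longrightarrow> x \<in> carrier_vec n \<Longrightarrow> minv (W g) *\<^sub>v x \<in> carrier_vec n"
  using pd_minv(1)[of n "W g"] by simp

lemma inv_eq: "pd n (W g) \<Longrightarrow> r \<in> carrier_vec n \<Longrightarrow> W g *\<^sub>v r = v \<Longrightarrow> minv (W g) *\<^sub>v v = r"
  using inv_left by blast

lemma inv_sym: "pd n (W g) \<Longrightarrow> x \<in> carrier_vec n \<Longrightarrow> y \<in> carrier_vec n \<Longrightarrow>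
    x \<bullet> (minv (W g) *\<^sub>v y) = y \<bullet> (minv (W g) *\<^sub>v x)"
  using sym_bilin[of "minv (W g)" n x y] pd_minv(1)[of n "W g"] minv_sym[of n "W g"] by simp

lemma inv_qf_nonneg: "pd n (W g) \<Longrightarrow> x \<in> carrier_vec n \<Longrightarrow> x \<bullet> (minv (W g) *\<^sub>v x) \<ge> 0"
  using pd_psd[OF minv_pd[of n "W g"]] unfolding psd_def qf_def by blast

lemma inv_psd: "pd n (W g) \<Longrightarrow> psd n (minv (W g))"
  using pd_psd[OF minv_pd[of n "W g"]] by blast

lemma W_sym_dot: "x \<in> carrier_vec n \<Longrightarrow> y \<in> carrier_vec n \<Longrightarrow> x \<bullet> (W g *\<^sub>v y) = y \<bullet> (W g *\<^sub>v x)"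
  by (simp add: W_dot mult.commute mult.left_commute)

lemma M_qf_nonneg: "x \<in> carrier_vec n \<Longrightarrow> qf M x \<ge> 0"
  by (simp add: qf_W sum_nonneg)

end

context bss begin

lemma W_shift:
  assumes x: "x \<in> carrier_vec n"
  shows "W (\<lambda>j. g j + c) *\<^sub>v x = W g *\<^sub>v x + c \<cdot>\<^sub>v (M *\<^sub>v x)"
  using x by (intro eq_vecI) (auto simp: W_mult_vec sum.distrib sum_distrib_left algebra_simps)


lemma W_mv_carrier[simp]: "W g *\<^sub>v x \<in> carrier_vec n"
  unfolding carrier_vec_def by simp

lemma res_gen:
  assumes pk: "pd n (W k)" and x: "x \<in> carrier_vec n" and v: "v \<in> carrier_vec n"
    and eq: "\<And>i. i < n \<Longrightarrow> (W k *\<^sub>v x) $ i = v $ i + c * (M *\<^sub>v x) $ i"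
    and y: "y \<in> carrier_vec n"
  shows "y \<bullet> x = y \<bullet> (minv (W k) *\<^sub>v v) + c * (y \<bullet> (minv (W k) *\<^sub>v (M *\<^sub>v x)))"
proof -
  have e: "W k *\<^sub>v x = v + c \<cdot>\<^sub>v (M *\<^sub>v x)"
    using x v eq by (intro eq_vecI) auto
  have mc: "minv (W k) \<in> carrier_mat n n" using pd_minv(1)[OF pk] .
  have "x = minv (W k) *\<^sub>v (W k *\<^sub>v x)" using inv_left[OF pk x] by simp
  also have "\<dots> = minv (W k) *\<^sub>v v + minv (W k) *\<^sub>v (c \<cdot>\<^sub>v (M *\<^sub>v x))"
    unfolding e by (rule mult_add_distrib_mat_vec[OF mc v]) (simp add: x)
  also have "minv (W k) *\<^sub>v (c \<cdot>\<^sub>v (M *\<^sub>v x)) = c \<cdot>\<^sub>v (minv (W k) *\<^sub>v (M *\<^sub>v x))"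
    by (rule mult_mat_vec[OF mc]) (simp add: x)
  finally have "y \<bullet> x = y \<bullet> (minv (W k) *\<^sub>v v + c \<cdot>\<^sub>v (minv (W k) *\<^sub>v (M *\<^sub>v x)))"
    by simp
  also have "\<dots> = y \<bullet> (minv (W k) *\<^sub>v v) + c * (y \<bullet> (minv (W k) *\<^sub>v (M *\<^sub>v x)))"
    using mc x v y by (simp add: scalar_prod_add_distrib[of _ n])
  finally show ?thesis .
qed

lemma res1:
  assumes pg: "pd n (W g)" and ph: "pd n (W (\<lambda>j. g j + d))"
    and v: "v \<in> carrier_vec n" and y: "y \<in> carrier_vec n"
  defines "x \<equiv> minv (W (\<lambda>j. g j + d)) *\<^sub>v v"
  shows "y \<bullet> (minv (W g) *\<^sub>v v) = y \<bullet> x + d * (y \<bullet> (minv (W g) *\<^sub>v (M *\<^sub>v x)))"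
proof -
  have xc: "x \<in> carrier_vec n" unfolding x_def using ph v by simp
  have hx: "W (\<lambda>j. g j + d) *\<^sub>v x = v" unfolding x_def using inv_right[OF ph v] .
  have "(W g *\<^sub>v x) $ i = v $ i + (- d) * (M *\<^sub>v x) $ i" if i: "i < n" for i
  proof -
    have "v $ i = (W g *\<^sub>v x + d \<cdot>\<^sub>v (M *\<^sub>v x)) $ i" using hx W_shift[OF xc, of g d] by simp
    also have "\<dots> = (W g *\<^sub>v x) $ i + d * (M *\<^sub>v x) $ i" using i xc by simp
    finally show ?thesis by simp
  qed
  from res_gen[OF pg xc v this y] show ?thesis by simp
qed

lemma res2:
  assumes pg: "pd n (W g)" and ph: "pd n (W (\<lambda>j. g j + d))"
    and v: "v \<in> carrier_vec n" and y: "y \<in> carrier_vec n"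
  defines "q \<equiv> minv (W g) *\<^sub>v v"
  shows "y \<bullet> q = y \<bullet> (minv (W (\<lambda>j. g j + d)) *\<^sub>v v) + d * (y \<bullet> (minv (W (\<lambda>j. g j + d)) *\<^sub>v (M *\<^sub>v q)))"
proof -
  have qc: "q \<in> carrier_vec n" unfolding q_def using pg v by simp
  have gq: "W g *\<^sub>v q = v" unfolding q_def using inv_right[OF pg v] .
  have "(W (\<lambda>j. g j + d) *\<^sub>v q) $ i = v $ i + d * (M *\<^sub>v q) $ i" if i: "i < n" for i
    using W_shift[OF qc, of g d] gq i qc by simp
  from res_gen[OF ph qc v this y] show ?thesis .
qed

lemma sherman_morrison:
  assumes pg: "pd n (W g)" and i: "i \<in> J" and pg': "pd n (W (g(i := g i + t)))"
    and v: "v \<in> carrier_vec n" and y: "y \<in> carrier_vec n"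
    and nz: "1 + t * (b i \<bullet> (minv (W g) *\<^sub>v b i)) \<noteq> 0"
  defines "z \<equiv> minv (W g) *\<^sub>v b i"
  shows "y \<bullet> (minv (W (g(i := g i + t))) *\<^sub>v v) =
    y \<bullet> (minv (W g) *\<^sub>v v) - t / (1 + t * (b i \<bullet> z)) * (z \<bullet> v) * (y \<bullet> z)"
proof -
  let ?\<beta> = "b i \<bullet> z"
  define c where "c = t / (1 + t * ?\<beta>)"
  have bi: "b i \<in> carrier_vec n" using bc[OF i] .
  have zc: "z \<in> carrier_vec n" unfolding z_def using pg bi by simp
  have Wz: "W g *\<^sub>v z = b i" unfolding z_def using inv_right[OF pg bi] .
  define p where "p = minv (W g) *\<^sub>v v"
  have pc: "p \<in> carrier_vec n" unfolding p_def using pg v by simp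
  have Wp: "W g *\<^sub>v p = v" unfolding p_def using inv_right[OF pg v] .
  define r where "r = p + (- c * (z \<bullet> v)) \<cdot>\<^sub>v z"
  have rc: "r \<in> carrier_vec n" unfolding r_def using pc zc by simp
  have bp: "b i \<bullet> p = z \<bullet> v"
    unfolding p_def z_def using inv_sym[OF pg bi v] comm_scalar_prod[OF v, of "minv (W g) *\<^sub>v b i"] pg bi
    by simp
  have br: "b i \<bullet> r = z \<bullet> v - c * (z \<bullet> v) * ?\<beta>"
    unfolding r_def using bi pc zc bp by (simp add: scalar_prod_add_distrib[of _ n])
  have cc: "c * (1 + t * ?\<beta>) = t" unfolding c_def using nz z_def by simp
  have Wgr: "W g *\<^sub>v r = v + (- c * (z \<bullet> v)) \<cdot>\<^sub>v b i"
    unfolding r_def using pc zc Wp Wz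
    by (simp add: mult_add_distrib_mat_vec[of _ n n] mult_mat_vec[of _ n n])
  have "W (g(i := g i + t)) *\<^sub>v r = v"
  proof -
    have "W (g(i := g i + t)) *\<^sub>v r = W g *\<^sub>v r + (t * (b i \<bullet> r)) \<cdot>\<^sub>v b i"
      using W_upd[OF rc i] .
    also have "\<dots> = v" unfolding Wgr br
    proof (intro eq_vecI)
      fix k assume "k < dim_vec v"
      then have k: "k < n" using v by simp
      have "(- c * (z \<bullet> v)) * b i $ k + t * (z \<bullet> v - c * (z \<bullet> v) * ?\<beta>) * b i $ k
          = (z \<bullet> v) * b i $ k * (t - c * (1 + t * ?\<beta>))" by (simp add: algebra_simps)
      also have "\<dots> = 0" using cc by simp
      finally show "(v + (- c * (z \<bullet> v)) \<cdot>\<^sub>v b i + (t * (z \<bullet> v - c * (z \<bullet> v) * ?\<beta>)) \<cdot>\<^sub>v b i) $ k = v $ k"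
        using k v bi by simp
    qed (use v bi in simp)
    finally show ?thesis .
  qed
  then have "minv (W (g(i := g i + t))) *\<^sub>v v = r" using inv_eq[OF pg' rc] by simp
  moreover have "y \<bullet> r = y \<bullet> p + (- c * (z \<bullet> v)) * (y \<bullet> z)"
    unfolding r_def using scalar_prod_add_distrib[OF y pc, of "(- c * (z \<bullet> v)) \<cdot>\<^sub>v z"] zc y by simp
  ultimately have "y \<bullet> (minv (W (g(i := g i + t))) *\<^sub>v v) = y \<bullet> p - c * (z \<bullet> v) * (y \<bullet> z)"
    by simp
  then show ?thesis unfolding c_def p_def by simp
qed

lemma Phi_nonneg: "pd n (W g) \<Longrightarrow> Phi g \<ge> 0"
  unfolding Phi_def by (rule sum_nonneg) (use inv_qf_nonneg bc in auto)

lemma Phi_sm: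
  assumes pg: "pd n (W g)" and i: "i \<in> J" and pg': "pd n (W (g(i := g i + t)))"
    and nz: "1 + t * (b i \<bullet> (minv (W g) *\<^sub>v b i)) \<noteq> 0"
  defines "z \<equiv> minv (W g) *\<^sub>v b i"
  shows "Phi (g(i := g i + t)) = Phi g - t / (1 + t * (b i \<bullet> z)) * qf M z"
proof -
  have zc: "z \<in> carrier_vec n" unfolding z_def using pg bc[OF i] by simp
  have "Phi (g(i := g i + t)) = (\<Sum>j\<in>J. b j \<bullet> (minv (W g) *\<^sub>v b j) - t / (1 + t * (b i \<bullet> z)) * (z \<bullet> b j) * (b j \<bullet> z))"
    unfolding Phi_def z_def by (rule sum.cong) (use sherman_morrison[OF pg i pg' _ _ nz] bc in auto)
  also have "\<dots> = Phi g - (\<Sum>j\<in>J. t / (1 + t * (b i \<bullet> z)) * (z \<bullet> b j) * (b j \<bullet> z))"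
    unfolding Phi_def by (rule sum_subtractf)
  also have "(\<Sum>j\<in>J. t / (1 + t * (b i \<bullet> z)) * (z \<bullet> b j) * (b j \<bullet> z)) =
      (\<Sum>j\<in>J. t / (1 + t * (b i \<bullet> z)) * (b j \<bullet> z)^2)"
  proof (rule sum.cong)
    fix j assume j: "j \<in> J"
    have "z \<bullet> b j = b j \<bullet> z" using comm_scalar_prod[OF zc bc[OF j]] .
    then show "t / (1 + t * (b i \<bullet> z)) * (z \<bullet> b j) * (b j \<bullet> z) = t / (1 + t * (b i \<bullet> z)) * (b j \<bullet> z)^2"
      by (simp add: power2_eq_square)
  qed simp
  also have "\<dots> = t / (1 + t * (b i \<bullet> z)) * (\<Sum>j\<in>J. (b j \<bullet> z)^2)"
    by (simp add: sum_distrib_left)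
  also have "(\<Sum>j\<in>J. (b j \<bullet> z)^2) = qf M z" using qf_W[OF zc] by simp
  finally show ?thesis .
qed

lemma exists_b_nonzero:
  assumes "n > 0" shows "\<exists>j\<in>J. b j \<noteq> 0\<^sub>v n"
proof -
  define e :: "real vec" where "e = unit_vec n 0"
  have ec: "e \<in> carrier_vec n" unfolding e_def by simp
  have "e \<noteq> 0\<^sub>v n"
  proof
    assume "e = 0\<^sub>v n"
    then have "e $ 0 = 0" using assms by simp
    moreover have "e $ 0 = 1" unfolding e_def using assms by simp
    ultimately show False by simp
  qed
  then have pos: "(\<Sum>j\<in>J. (b j \<bullet> e)^2) > 0" using Mpos ec by blast
  show ?thesis
  proof (rule ccontr)
    assume "\<not> ?thesis"
    then have "\<forall>j\<in>J. (b j \<bullet> e)^2 = 0" using ec by auto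
    then have "(\<Sum>j\<in>J. (b j \<bullet> e)^2) = 0" by simp
    with pos show False by simp
  qed
qed

lemma sum_qfM_pos:
  assumes "n > 0" "pd n (W g)"
  shows "(\<Sum>j\<in>J. qf M (minv (W g) *\<^sub>v b j)) > 0"
proof -
  obtain j where j: "j \<in> J" "b j \<noteq> 0\<^sub>v n" using exists_b_nonzero[OF assms(1)] by blast
  let ?z = "minv (W g) *\<^sub>v b j"
  have zc: "?z \<in> carrier_vec n" using assms bc[OF j(1)] by simp
  have "W g *\<^sub>v ?z = b j" using inv_right[OF assms(2) bc[OF j(1)]] .
  moreover have "W g *\<^sub>v 0\<^sub>v n = 0\<^sub>v n" by (intro eq_vecI) auto
  ultimately have "?z \<noteq> 0\<^sub>v n" using j(2) by auto
  then have "qf M ?z > 0" using M_pd zc unfolding pd_def by blast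
  moreover have "\<forall>k\<in>J. qf M (minv (W g) *\<^sub>v b k) \<ge> 0" using M_qf_nonneg assms bc by simp
  ultimately show ?thesis using finJ j(1) by (intro sum_pos2[of J j]) auto
qed

end

lemma lower_arith:
  fixes a d e P :: real
  assumes "a > 0" "d > 0" "e \<ge> 0" "a^2 \<le> P * e" "d * P \<le> 1" "P \<ge> 0"
  shows "(a + d * e) / (d * a) - (P + d * a) \<ge> 1 / d - P"
proof -
  have "d * a^2 \<le> d * (P * e)" using assms by (intro mult_left_mono) auto
  also have "\<dots> = (d * P) * e" by simp
  also have "\<dots> \<le> 1 * e" using assms by (intro mult_right_mono) auto
  finally have h: "d * a^2 \<le> e" by simp
  have "(a + d * e) / (d * a) = 1 / d + e / a" using assms by (simp add: field_simps)
  moreover have "e / a \<ge> d * a"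
    using h assms by (simp add: field_simps power2_eq_square)
  ultimately show ?thesis by simp
qed

lemma exists_pos_term:
  fixes f :: "'j \<Rightarrow> real"
  assumes "finite J" "sum f J > 0" shows "\<exists>i\<in>J. f i > 0"
proof (rule ccontr)
  assume "\<not> ?thesis"
  then have "sum f J \<le> 0" by (intro sum_nonpos) (auto simp: not_less)
  with assms show False by simp
qed

context bss begin

lemma qf_upd:
  assumes x: "x \<in> carrier_vec n" and i: "i \<in> J"
  shows "qf (W (g(i := g i + c))) x = qf (W g) x + c * (b i \<bullet> x)^2"
proof -
  have "qf (W (g(i := g i + c))) x = x \<bullet> (W g *\<^sub>v x + (c * (b i \<bullet> x)) \<cdot>\<^sub>v b i)"
    unfolding qf_def using W_upd[OF x i] by simp
  also have "\<dots> = qf (W g) x + c * (b i \<bullet> x) * (x \<bullet> b i)"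
    unfolding qf_def using x bc[OF i] by (simp add: scalar_prod_add_distrib[of _ n])
  also have "x \<bullet> b i = b i \<bullet> x" using comm_scalar_prod[OF x bc[OF i]] .
  finally show ?thesis unfolding power2_eq_square by (simp only: mult.assoc)
qed

lemma qf_shift:
  assumes x: "x \<in> carrier_vec n"
  shows "qf (W (\<lambda>j. g j + d)) x = qf (W g) x + d * qf M x"
  using x by (simp add: qf_W algebra_simps sum.distrib sum_distrib_left)

lemma pd_W_iff: "pd n (W g) \<longleftrightarrow> (\<forall>x\<in>carrier_vec n. x \<noteq> 0\<^sub>v n \<longrightarrow> qf (W g) x > 0)"
  unfolding pd_def using W_sym by auto

lemma lowpd:
  assumes pY: "pd n (W (\<lambda>j. g j + d))" and d: "d > 0" and ph: "d * Phi (\<lambda>j. g j + d) < 1"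
  shows "pd n (W g)"
  unfolding pd_W_iff
proof (intro ballI impI)
  fix x :: "real vec" assume x: "x \<in> carrier_vec n" and x0: "x \<noteq> 0\<^sub>v n"
  let ?Y = "W (\<lambda>j. g j + d)"
  let ?P = "Phi (\<lambda>j. g j + d)"
  have P0: "?P \<ge> 0" using Phi_nonneg[OF pY] .
  have qM: "qf M x > 0" using M_pd x x0 unfolding pd_def by blast
  have qY: "qf ?Y x > 0" using pY x x0 unfolding pd_def by blast
  define m where "m = M *\<^sub>v x"
  define p where "p = minv ?Y *\<^sub>v m"
  have mc: "m \<in> carrier_vec n" unfolding m_def by simp
  have pc: "p \<in> carrier_vec n" unfolding p_def using pY mc by simp
  define Q where "Q = m \<bullet> p"
  have Q0: "Q \<ge> 0" unfolding Q_def p_def using inv_qf_nonneg[OF pY mc] .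
  have Qsum: "Q = (\<Sum>j\<in>J. (b j \<bullet> x) * (b j \<bullet> p))"
  proof -
    have "Q = p \<bullet> m" unfolding Q_def using comm_scalar_prod[OF mc pc] .
    also have "\<dots> = (\<Sum>j\<in>J. 1 * (b j \<bullet> x) * (b j \<bullet> p))" unfolding m_def using W_dot[OF x pc] .
    finally show ?thesis by simp
  qed
  have tm: "((b j \<bullet> x) * (b j \<bullet> p))^2 \<le> (b j \<bullet> x)^2 * ((b j \<bullet> (minv ?Y *\<^sub>v b j)) * Q)"
    if j: "j \<in> J" for j
  proof -
    have bj: "b j \<in> carrier_vec n" using bc[OF j] .
    have "(b j \<bullet> p)^2 \<le> qf (minv ?Y) (b j) * qf (minv ?Y) m"
      unfolding p_def by (rule cs_psd[OF inv_psd[OF pY] bj mc])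
    also have "qf (minv ?Y) (b j) = b j \<bullet> (minv ?Y *\<^sub>v b j)" unfolding qf_def ..
    also have "qf (minv ?Y) m = Q" unfolding qf_def Q_def p_def ..
    finally have "(b j \<bullet> p)^2 \<le> (b j \<bullet> (minv ?Y *\<^sub>v b j)) * Q" .
    then have "(b j \<bullet> x)^2 * (b j \<bullet> p)^2 \<le> (b j \<bullet> x)^2 * ((b j \<bullet> (minv ?Y *\<^sub>v b j)) * Q)"
      by (intro mult_left_mono) auto
    then show ?thesis by (simp add: power_mult_distrib)
  qed
  have "(\<Sum>j\<in>J. (b j \<bullet> x) * (b j \<bullet> p))^2 \<le> (\<Sum>j\<in>J. (b j \<bullet> x)^2) * (\<Sum>j\<in>J. (b j \<bullet> (minv ?Y *\<^sub>v b j)) * Q)"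
    by (rule sum_cs[OF finJ]) (use tm Q0 inv_qf_nonneg[OF pY] bc in auto)
  then have "Q^2 \<le> (\<Sum>j\<in>J. (b j \<bullet> x)^2) * (\<Sum>j\<in>J. (b j \<bullet> (minv ?Y *\<^sub>v b j)) * Q)"
    unfolding Qsum .
  also have "(\<Sum>j\<in>J. (b j \<bullet> x)^2) = qf M x" using qf_W[OF x] by simp
  also have "(\<Sum>j\<in>J. (b j \<bullet> (minv ?Y *\<^sub>v b j)) * Q) = ?P * Q"
    unfolding Phi_def by (simp add: sum_distrib_right)
  finally have QQ: "Q^2 \<le> qf M x * (?P * Q)" .
  have QB: "Q \<le> qf M x * ?P"
  proof (cases "Q = 0")
    case True then show ?thesis using qM P0 by simp
  next
    case False
    then have "Q > 0" using Q0 by simp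
    then show ?thesis using QQ by (simp add: power2_eq_square algebra_simps)
  qed
  have Ym: "?Y *\<^sub>v p = m" unfolding p_def using inv_right[OF pY mc] .
  have "(x \<bullet> (?Y *\<^sub>v p))^2 \<le> qf ?Y x * qf ?Y p"
    by (rule cs_psd[OF pd_psd[OF pY] x pc])
  moreover have "x \<bullet> (?Y *\<^sub>v p) = qf M x" unfolding Ym m_def qf_def ..
  moreover have "qf ?Y p = Q" unfolding qf_def Ym Q_def using comm_scalar_prod[OF mc pc] by simp
  ultimately have "(qf M x)^2 \<le> qf ?Y x * Q" by simp
  also have "\<dots> \<le> qf ?Y x * (qf M x * ?P)" using QB qY by (intro mult_left_mono) auto
  finally have "qf M x * qf M x \<le> qf M x * (qf ?Y x * ?P)" by (simp add: power2_eq_square algebra_simps)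
  then have h: "qf M x \<le> qf ?Y x * ?P" using qM by simp
  have "d * qf M x \<le> d * (qf ?Y x * ?P)" using h d by (intro mult_left_mono) auto
  also have "\<dots> = (d * ?P) * qf ?Y x" by simp
  also have "\<dots> < 1 * qf ?Y x" using ph qY by (intro mult_strict_right_mono) auto
  finally have "d * qf M x < qf ?Y x" by simp
  then show "qf (W g) x > 0" using qf_shift[OF x, of g d] by simp
qed

lemma upper_analysis:
  assumes n0: "n > 0" and pW: "pd n (W g)" and d: "d > 0"
  shows "pd n (W (\<lambda>j. g j + d))"
    and "Phi g - Phi (\<lambda>j. g j + d) \<ge> d * (\<Sum>j\<in>J. qf M (minv (W (\<lambda>j. g j + d)) *\<^sub>v b j))"
    and "Phi g - Phi (\<lambda>j. g j + d) > 0"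
proof -
  show pZ: "pd n (W (\<lambda>j. g j + d))"
    unfolding pd_W_iff
  proof (intro ballI impI)
    fix x :: "real vec" assume x: "x \<in> carrier_vec n" "x \<noteq> 0\<^sub>v n"
    have "qf (W g) x > 0" using pW x unfolding pd_def by blast
    moreover have "qf M x \<ge> 0" using M_qf_nonneg x by simp
    moreover have "d * qf M x \<ge> 0" using d \<open>qf M x \<ge> 0\<close> by simp
    ultimately show "qf (W (\<lambda>j. g j + d)) x > 0" by (simp add: qf_shift[OF x(1)])
  qed
  let ?Z = "W (\<lambda>j. g j + d)"
  have tm: "b j \<bullet> (minv (W g) *\<^sub>v b j) - b j \<bullet> (minv ?Z *\<^sub>v b j) \<ge> d * qf M (minv ?Z *\<^sub>v b j)"
    if j: "j \<in> J" for j
  proof -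
    have bj: "b j \<in> carrier_vec n" using bc[OF j] .
    define z where "z = minv ?Z *\<^sub>v b j"
    have zc: "z \<in> carrier_vec n" unfolding z_def using pZ bj by simp
    have Mz: "M *\<^sub>v z \<in> carrier_vec n" by simp
    have e1: "b j \<bullet> (minv (W g) *\<^sub>v b j) = b j \<bullet> z + d * (b j \<bullet> (minv (W g) *\<^sub>v (M *\<^sub>v z)))"
      unfolding z_def by (rule res1[OF pW pZ bj bj])
    have e2: "(M *\<^sub>v z) \<bullet> (minv (W g) *\<^sub>v b j) = (M *\<^sub>v z) \<bullet> z + d * ((M *\<^sub>v z) \<bullet> (minv (W g) *\<^sub>v (M *\<^sub>v z)))"
      unfolding z_def by (rule res1[OF pW pZ bj Mz[unfolded z_def]])
    have s1: "b j \<bullet> (minv (W g) *\<^sub>v (M *\<^sub>v z)) = (M *\<^sub>v z) \<bullet> (minv (W g) *\<^sub>v b j)"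
      using inv_sym[OF pW bj Mz] .
    have nn: "(M *\<^sub>v z) \<bullet> (minv (W g) *\<^sub>v (M *\<^sub>v z)) \<ge> 0" using inv_qf_nonneg[OF pW Mz] .
    have q: "(M *\<^sub>v z) \<bullet> z = qf M z" unfolding qf_def using comm_scalar_prod[OF Mz zc] .
    have "b j \<bullet> (minv (W g) *\<^sub>v (M *\<^sub>v z)) \<ge> qf M z" using e2 s1 nn q d by simp
    then have "d * (b j \<bullet> (minv (W g) *\<^sub>v (M *\<^sub>v z))) \<ge> d * qf M z" using d by simp
    then show ?thesis using e1 unfolding z_def by simp
  qed
  have "Phi g - Phi (\<lambda>j. g j + d) = (\<Sum>j\<in>J. b j \<bullet> (minv (W g) *\<^sub>v b j) - b j \<bullet> (minv ?Z *\<^sub>v b j))"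
    unfolding Phi_def by (simp add: sum_subtractf)
  also have "\<dots> \<ge> (\<Sum>j\<in>J. d * qf M (minv ?Z *\<^sub>v b j))" by (rule sum_mono) (use tm in auto)
  finally show ge: "Phi g - Phi (\<lambda>j. g j + d) \<ge> d * (\<Sum>j\<in>J. qf M (minv ?Z *\<^sub>v b j))"
    by (simp add: sum_distrib_left)
  have "d * (\<Sum>j\<in>J. qf M (minv ?Z *\<^sub>v b j)) > 0" using sum_qfM_pos[OF n0 pZ] d by simp
  then show "Phi g - Phi (\<lambda>j. g j + d) > 0" using ge by simp
qed

end

context bss begin

lemma lower_analysis:
  assumes n0: "n > 0" and pX: "pd n (W g)" and pY: "pd n (W (\<lambda>j. g j + d))" and d: "d > 0"
    and dP: "d * Phi (\<lambda>j. g j + d) \<le> 1"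
  shows "Phi g - Phi (\<lambda>j. g j + d) > 0"
    and "(\<Sum>j\<in>J. qf M (minv (W g) *\<^sub>v b j) / (Phi g - Phi (\<lambda>j. g j + d)) - b j \<bullet> (minv (W g) *\<^sub>v b j))
          \<ge> 1 / d - Phi (\<lambda>j. g j + d)"
proof -
  let ?Y = "W (\<lambda>j. g j + d)"
  let ?P = "Phi (\<lambda>j. g j + d)"
  define x where "x j = minv (W g) *\<^sub>v b j" for j
  define y where "y j = minv ?Y *\<^sub>v b j" for j
  define a where "a j = (M *\<^sub>v y j) \<bullet> x j" for j
  define e where "e j = (M *\<^sub>v x j) \<bullet> (minv ?Y *\<^sub>v (M *\<^sub>v x j))" for j
  have xc: "x j \<in> carrier_vec n" if "j \<in> J" for j unfolding x_def using pX bc that by simp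
  have yc: "y j \<in> carrier_vec n" if "j \<in> J" for j unfolding y_def using pY bc that by simp
  have i1: "b j \<bullet> x j = b j \<bullet> y j + d * a j" if j: "j \<in> J" for j
  proof -
    have bj: "b j \<in> carrier_vec n" using bc[OF j] .
    have My: "M *\<^sub>v y j \<in> carrier_vec n" by simp
    have "b j \<bullet> x j = b j \<bullet> y j + d * (b j \<bullet> (minv (W g) *\<^sub>v (M *\<^sub>v y j)))"
      unfolding x_def y_def by (rule res1[OF pX pY bj bj])
    moreover have "b j \<bullet> (minv (W g) *\<^sub>v (M *\<^sub>v y j)) = a j"
      unfolding a_def x_def using inv_sym[OF pX bj My] .
    ultimately show ?thesis by simp
  qed
  have i2: "a j \<ge> qf M (y j)" if j: "j \<in> J" for j
  proof -
    have bj: "b j \<in> carrier_vec n" using bc[OF j] .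
    have My: "M *\<^sub>v y j \<in> carrier_vec n" by simp
    have "(M *\<^sub>v y j) \<bullet> x j = (M *\<^sub>v y j) \<bullet> y j + d * ((M *\<^sub>v y j) \<bullet> (minv (W g) *\<^sub>v (M *\<^sub>v y j)))"
      unfolding x_def y_def by (rule res1[OF pX pY bj My[unfolded y_def]])
    moreover have "(M *\<^sub>v y j) \<bullet> (minv (W g) *\<^sub>v (M *\<^sub>v y j)) \<ge> 0" using inv_qf_nonneg[OF pX My] .
    moreover have "(M *\<^sub>v y j) \<bullet> y j = qf M (y j)" unfolding qf_def using comm_scalar_prod[OF My yc[OF j]] .
    ultimately show ?thesis unfolding a_def using d by simp
  qed
  have i3: "qf M (x j) = a j + d * e j" and e0: "e j \<ge> 0" and ay: "a j = (M *\<^sub>v x j) \<bullet> y j"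
    if j: "j \<in> J" for j
  proof -
    have bj: "b j \<in> carrier_vec n" using bc[OF j] .
    have Mx: "M *\<^sub>v x j \<in> carrier_vec n" by simp
    have r: "(M *\<^sub>v x j) \<bullet> x j = (M *\<^sub>v x j) \<bullet> y j + d * e j"
      unfolding x_def y_def e_def by (rule res2[OF pX pY bj Mx[unfolded x_def]])
    show ay: "a j = (M *\<^sub>v x j) \<bullet> y j"
    proof -
      have "(M *\<^sub>v x j) \<bullet> y j = y j \<bullet> (M *\<^sub>v x j)" using comm_scalar_prod[OF Mx yc[OF j]] .
      also have "\<dots> = x j \<bullet> (M *\<^sub>v y j)" using W_sym_dot[OF yc[OF j] xc[OF j]] .
      also have "\<dots> = (M *\<^sub>v y j) \<bullet> x j" using comm_scalar_prod[OF xc[OF j], of "M *\<^sub>v y j"] by simp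
      finally show ?thesis unfolding a_def by simp
    qed
    show "e j \<ge> 0" unfolding e_def using inv_qf_nonneg[OF pY Mx] .
    have "qf M (x j) = (M *\<^sub>v x j) \<bullet> x j" unfolding qf_def using comm_scalar_prod[OF xc[OF j], of "M *\<^sub>v x j"] by simp
    then show "qf M (x j) = a j + d * e j" using r ay by simp
  qed
  have i4: "(a j)^2 \<le> e j * (b j \<bullet> y j)" if j: "j \<in> J" for j
  proof -
    have bj: "b j \<in> carrier_vec n" using bc[OF j] .
    have Mx: "M *\<^sub>v x j \<in> carrier_vec n" by simp
    have "((M *\<^sub>v x j) \<bullet> (minv ?Y *\<^sub>v b j))^2 \<le> qf (minv ?Y) (M *\<^sub>v x j) * qf (minv ?Y) (b j)"
      by (rule cs_psd[OF inv_psd[OF pY] Mx bj])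
    then show ?thesis unfolding ay[OF j] qf_def e_def y_def .
  qed
  define A where "A = (\<Sum>j\<in>J. a j)"
  define E where "E = (\<Sum>j\<in>J. e j)"
  have PY: "?P = (\<Sum>j\<in>J. b j \<bullet> y j)" unfolding Phi_def y_def ..
  have PX: "Phi g = ?P + d * A"
  proof -
    have "Phi g = (\<Sum>j\<in>J. b j \<bullet> x j)" unfolding Phi_def x_def ..
    also have "\<dots> = (\<Sum>j\<in>J. b j \<bullet> y j + d * a j)" by (rule sum.cong) (use i1 in auto)
    also have "\<dots> = ?P + d * A" unfolding PY A_def by (simp add: sum.distrib sum_distrib_left)
    finally show ?thesis .
  qed
  have Apos: "A > 0"
  proof -
    have "A \<ge> (\<Sum>j\<in>J. qf M (y j))" unfolding A_def by (rule sum_mono) (use i2 in auto)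
    moreover have "(\<Sum>j\<in>J. qf M (y j)) > 0" unfolding y_def using sum_qfM_pos[OF n0 pY] .
    ultimately show ?thesis by simp
  qed
  then show "Phi g - ?P > 0" using PX d by simp
  have E0: "E \<ge> 0" unfolding E_def by (rule sum_nonneg) (use e0 in auto)
  have P0: "?P \<ge> 0" using Phi_nonneg[OF pY] .
  have CS: "A^2 \<le> ?P * E"
  proof -
    have "A^2 \<le> (\<Sum>j\<in>J. e j) * (\<Sum>j\<in>J. b j \<bullet> y j)"
      unfolding A_def by (rule sum_cs[OF finJ]) (use i4 e0 inv_qf_nonneg[OF pY] bc in \<open>auto simp: y_def\<close>)
    then show ?thesis unfolding E_def PY by (simp add: mult.commute)
  qed
  have C: "(\<Sum>j\<in>J. qf M (x j)) = A + d * E"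
    unfolding A_def E_def using i3 by (simp add: sum.distrib sum_distrib_left)
  have "(\<Sum>j\<in>J. qf M (minv (W g) *\<^sub>v b j) / (Phi g - ?P) - b j \<bullet> (minv (W g) *\<^sub>v b j))
      = (\<Sum>j\<in>J. qf M (x j)) / (Phi g - ?P) - Phi g"
    unfolding Phi_def x_def by (simp add: sum_subtractf sum_divide_distrib)
  also have "\<dots> = (A + d * E) / (d * A) - (?P + d * A)" unfolding C using PX by simp
  also have "\<dots> \<ge> 1 / d - ?P" by (rule lower_arith[OF Apos d E0 CS dP P0])
  finally show "(\<Sum>j\<in>J. qf M (minv (W g) *\<^sub>v b j) / (Phi g - ?P) - b j \<bullet> (minv (W g) *\<^sub>v b j)) \<ge> 1 / d - ?P" .
qed

lemma step:
  assumes n0: "n > 0"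
    and pW: "pd n (W (\<lambda>j. u - s j))" and pY: "pd n (W (\<lambda>j. s j - l))"
    and PW: "Phi (\<lambda>j. u - s j) \<le> eU" and PY: "Phi (\<lambda>j. s j - l) \<le> eL"
    and dU: "dU > 0" and dL: "dL > 0" and dLe: "dL * eL < 1"
    and gap: "1 / dU + eU < 1 / dL - eL"
  shows "\<exists>i\<in>J. \<exists>t>0.
     pd n (W (\<lambda>j. (u + dU) - (s(i := s i + t)) j)) \<and>
     pd n (W (\<lambda>j. (s(i := s i + t)) j - (l + dL))) \<and>
     Phi (\<lambda>j. (u + dU) - (s(i := s i + t)) j) \<le> eU \<and>
     Phi (\<lambda>j. (s(i := s i + t)) j - (l + dL)) \<le> eL"
proof -
  define gW where "gW = (\<lambda>j. u - s j)"
  define gZ where "gZ = (\<lambda>j. gW j + dU)"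
  define gX where "gX = (\<lambda>j. s j - (l + dL))"
  have gY: "(\<lambda>j. s j - l) = (\<lambda>j. gX j + dL)" unfolding gX_def by (rule ext) simp
  have pW': "pd n (W gW)" using pW unfolding gW_def .
  have pY': "pd n (W (\<lambda>j. gX j + dL))" using pY unfolding gY .
  have PY': "Phi (\<lambda>j. gX j + dL) \<le> eL" using PY unfolding gY .
  have P0: "Phi (\<lambda>j. gX j + dL) \<ge> 0" using Phi_nonneg[OF pY'] .
  have dLP: "dL * Phi (\<lambda>j. gX j + dL) \<le> dL * eL" using PY' dL by (intro mult_left_mono) auto
  have pX: "pd n (W gX)" by (rule lowpd[OF pY' dL]) (use dLP dLe in simp)
  note UA = upper_analysis[OF n0 pW' dU]
  have pZ: "pd n (W gZ)" using UA(1) unfolding gZ_def .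
  define DU where "DU = Phi gW - Phi gZ"
  have DUpos: "DU > 0" using UA(3) unfolding DU_def gZ_def .
  have DUge: "DU \<ge> dU * (\<Sum>j\<in>J. qf M (minv (W gZ) *\<^sub>v b j))" using UA(2) unfolding DU_def gZ_def .
  note LA = lower_analysis[OF n0 pX pY' dL, OF order.trans[OF dLP less_imp_le[OF dLe]]]
  define DL where "DL = Phi gX - Phi (\<lambda>j. gX j + dL)"
  have DLpos: "DL > 0" using LA(1) unfolding DL_def .
  define z where "z j = minv (W gZ) *\<^sub>v b j" for j
  define x where "x j = minv (W gX) *\<^sub>v b j" for j
  define U where "U j = qf M (z j) / DU + b j \<bullet> z j" for j
  define L where "L j = qf M (x j) / DL - b j \<bullet> x j" for j
  have zc: "z j \<in> carrier_vec n" if "j \<in> J" for j unfolding z_def using pZ bc that by simp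
  have xc: "x j \<in> carrier_vec n" if "j \<in> J" for j unfolding x_def using pX bc that by simp
  have sumL: "(\<Sum>j\<in>J. L j) \<ge> 1 / dL - eL"
    using LA(2) PY' unfolding L_def x_def DL_def by simp
  have sumU: "(\<Sum>j\<in>J. U j) \<le> 1 / dU + eU"
  proof -
    have "(\<Sum>j\<in>J. U j) = (\<Sum>j\<in>J. qf M (z j)) / DU + Phi gZ"
      unfolding U_def Phi_def z_def by (simp add: sum.distrib sum_divide_distrib)
    also have "(\<Sum>j\<in>J. qf M (z j)) / DU \<le> 1 / dU"
      using DUge DUpos dU unfolding z_def by (simp add: field_simps)
    also have "Phi gZ \<le> eU" using PW DUpos unfolding DU_def gW_def by simp
    finally show ?thesis by simp
  qed
  have "(\<Sum>j\<in>J. L j - U j) > 0" using sumL sumU gap by (simp add: sum_subtractf)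
  then obtain i where i: "i \<in> J" and LU: "L i - U i > 0" using exists_pos_term[OF finJ] by blast
  have bi: "b i \<in> carrier_vec n" using bc[OF i] .
  define \<beta> where "\<beta> = b i \<bullet> z i"
  define \<gamma> where "\<gamma> = qf M (z i)"
  have \<beta>0: "\<beta> \<ge> 0" unfolding \<beta>_def z_def using inv_qf_nonneg[OF pZ bi] .
  have \<gamma>0: "\<gamma> \<ge> 0" unfolding \<gamma>_def using M_qf_nonneg[OF zc[OF i]] .
  have U0: "U i \<ge> \<beta>" unfolding U_def \<beta>_def using \<gamma>0 DUpos \<gamma>_def by simp
  have Lpos: "L i > 0" using LU U0 \<beta>0 by simp
  define t where "t = 1 / L i"
  have t0: "t > 0" unfolding t_def using Lpos by simp
  have tL: "1 / t = L i" unfolding t_def by simp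
  have t\<beta>: "t * \<beta> < 1"
  proof -
    have "\<beta> < 1 / t" using tL LU U0 by simp
    then show ?thesis using t0 by (simp add: field_simps)
  qed
  
  define gZ' where "gZ' = gZ(i := gZ i + (- t))"
  have eqZ: "(\<lambda>j. (u + dU) - (s(i := s i + t)) j) = gZ'"
    unfolding gZ'_def gZ_def gW_def by (rule ext) auto
  have pZ': "pd n (W gZ')"
    unfolding pd_W_iff
  proof (intro ballI impI)
    fix v :: "real vec" assume v: "v \<in> carrier_vec n" "v \<noteq> 0\<^sub>v n"
    have qZ: "qf (W gZ) v > 0" using pZ v unfolding pd_def by blast
    have "(z i \<bullet> (W gZ *\<^sub>v v))^2 \<le> qf (W gZ) (z i) * qf (W gZ) v"
      by (rule cs_psd[OF pd_psd[OF pZ] zc[OF i] v(1)])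
    moreover have "z i \<bullet> (W gZ *\<^sub>v v) = b i \<bullet> v"
    proof -
      have "z i \<bullet> (W gZ *\<^sub>v v) = v \<bullet> (W gZ *\<^sub>v z i)" using W_sym_dot[OF zc[OF i] v(1)] .
      also have "W gZ *\<^sub>v z i = b i" unfolding z_def using inv_right[OF pZ bi] .
      finally show ?thesis using comm_scalar_prod[OF v(1) bi] by simp
    qed
    moreover have "qf (W gZ) (z i) = \<beta>"
      unfolding qf_def \<beta>_def using inv_right[OF pZ bi] comm_scalar_prod[OF zc[OF i] bi] unfolding z_def by simp
    ultimately have "(b i \<bullet> v)^2 \<le> \<beta> * qf (W gZ) v" by simp
    then have "t * (b i \<bullet> v)^2 \<le> t * (\<beta> * qf (W gZ) v)" using t0 by (intro mult_left_mono) auto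
    also have "\<dots> = (t * \<beta>) * qf (W gZ) v" by simp
    also have "\<dots> < 1 * qf (W gZ) v" using t\<beta> qZ by (intro mult_strict_right_mono) auto
    finally have "t * (b i \<bullet> v)^2 < qf (W gZ) v" by simp
    then show "qf (W gZ') v > 0" unfolding gZ'_def using qf_upd[OF v(1) i, of gZ "- t"] by simp
  qed
  have nzZ: "1 + (- t) * (b i \<bullet> (minv (W gZ) *\<^sub>v b i)) \<noteq> 0"
    using t\<beta> unfolding \<beta>_def z_def by simp
  have PhiZ': "Phi gZ' = Phi gZ + t / (1 - t * \<beta>) * \<gamma>"
    using Phi_sm[OF pZ i pZ'[unfolded gZ'_def] nzZ] unfolding gZ'_def \<beta>_def \<gamma>_def z_def by simp
  have "\<gamma> / DU + \<beta> \<le> 1 / t" using tL LU unfolding U_def \<gamma>_def \<beta>_def by simp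
  then have "\<gamma> \<le> DU * (1 / t - \<beta>)" using DUpos by (simp add: field_simps)
  then have "t * \<gamma> \<le> DU * (1 - t * \<beta>)" using t0 by (simp add: field_simps)
  then have "t / (1 - t * \<beta>) * \<gamma> \<le> DU" using t\<beta> by (simp add: field_simps)
  then have PZ'le: "Phi gZ' \<le> eU" using PhiZ' PW unfolding DU_def gW_def by simp
  
  define gX' where "gX' = gX(i := gX i + t)"
  have eqX: "(\<lambda>j. (s(i := s i + t)) j - (l + dL)) = gX'"
    unfolding gX'_def gX_def by (rule ext) auto
  have pX': "pd n (W gX')"
    unfolding pd_W_iff
  proof (intro ballI impI)
    fix v :: "real vec" assume v: "v \<in> carrier_vec n" "v \<noteq> 0\<^sub>v n"
    have "qf (W gX) v > 0" using pX v unfolding pd_def by blast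
    moreover have "t * (b i \<bullet> v)^2 \<ge> 0" using t0 by simp
    ultimately show "qf (W gX') v > 0" unfolding gX'_def using qf_upd[OF v(1) i, of gX t] by simp
  qed
  define \<beta>' where "\<beta>' = b i \<bullet> x i"
  define \<gamma>' where "\<gamma>' = qf M (x i)"
  have \<beta>'0: "\<beta>' \<ge> 0" unfolding \<beta>'_def x_def using inv_qf_nonneg[OF pX bi] .
  have tb0: "t * \<beta>' \<ge> 0" using \<beta>'0 t0 by simp
  have nzX: "1 + t * (b i \<bullet> (minv (W gX) *\<^sub>v b i)) \<noteq> 0"
    using tb0 unfolding \<beta>'_def x_def by linarith
  have PhiX': "Phi gX' = Phi gX - t / (1 + t * \<beta>') * \<gamma>'"
    using Phi_sm[OF pX i pX'[unfolded gX'_def] nzX] unfolding gX'_def \<beta>'_def \<gamma>'_def x_def by simp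
  have "\<gamma>' / DL - \<beta>' = 1 / t" using tL unfolding L_def \<gamma>'_def \<beta>'_def by simp
  then have "\<gamma>' = DL * (1 / t + \<beta>')" using DLpos by (simp add: field_simps)
  then have "t * \<gamma>' = DL * (1 + t * \<beta>')" using t0 by (simp add: field_simps)
  moreover have "1 + t * \<beta>' > 0" using tb0 by linarith
  ultimately have "t / (1 + t * \<beta>') * \<gamma>' = DL"
    by (simp add: field_simps)
  then have PX'le: "Phi gX' \<le> eL" using PhiX' PY' unfolding DL_def by simp
  show ?thesis
    by (rule bexI[OF _ i], rule exI[of _ t]) (use t0 pZ' pX' PZ'le PX'le eqZ eqX in simp)
qed

end

context bss begin

lemma pd_const: "c > 0 \<Longrightarrow> pd n (W (\<lambda>_. c))"
  unfolding pd_W_iff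
proof (intro ballI impI)
  fix x :: "real vec" assume c: "c > 0" and x: "x \<in> carrier_vec n" "x \<noteq> 0\<^sub>v n"
  have "qf M x > 0" using M_pd x unfolding pd_def by blast
  moreover have "qf (W (\<lambda>_. c)) x = c * qf M x" using x by (simp add: qf_W sum_distrib_left)
  ultimately show "qf (W (\<lambda>_. c)) x > 0" using c by simp
qed

lemma Phi_const:
  assumes c: "c > 0" shows "Phi (\<lambda>_. c) = real n / c"
proof -
  have pc: "pd n (W (\<lambda>_. c))" using pd_const[OF c] .
  have pM: "pd n M" using M_pd .
  have e: "minv (W (\<lambda>_. c)) *\<^sub>v v = (1 / c) \<cdot>\<^sub>v (minv M *\<^sub>v v)" if v: "v \<in> carrier_vec n" for v
  proof (rule inv_eq[OF pc])
    have mc: "minv M *\<^sub>v v \<in> carrier_vec n" using pM v by simp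
    show "(1 / c) \<cdot>\<^sub>v (minv M *\<^sub>v v) \<in> carrier_vec n" using mc by simp
    have "W (\<lambda>_. c) *\<^sub>v ((1 / c) \<cdot>\<^sub>v (minv M *\<^sub>v v)) = c \<cdot>\<^sub>v (M *\<^sub>v ((1 / c) \<cdot>\<^sub>v (minv M *\<^sub>v v)))"
      by (rule W_const) (use mc in simp)
    also have "M *\<^sub>v ((1 / c) \<cdot>\<^sub>v (minv M *\<^sub>v v)) = (1 / c) \<cdot>\<^sub>v (M *\<^sub>v (minv M *\<^sub>v v))"
      by (rule mult_mat_vec[OF W_carrier mc])
    also have "M *\<^sub>v (minv M *\<^sub>v v) = v" using inv_right[OF pM v] .
    finally show "W (\<lambda>_. c) *\<^sub>v ((1 / c) \<cdot>\<^sub>v (minv M *\<^sub>v v)) = v"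
      using c v by (simp add: smult_smult_assoc)
  qed
  have "Phi (\<lambda>_. c) = (\<Sum>j\<in>J. (1 / c) * (b j \<bullet> (minv M *\<^sub>v b j)))"
    unfolding Phi_def
  proof (rule sum.cong)
    fix j assume j: "j \<in> J"
    have mc: "minv M *\<^sub>v b j \<in> carrier_vec n" using pM bc[OF j] by simp
    show "b j \<bullet> (minv (W (\<lambda>_. c)) *\<^sub>v b j) = 1 / c * (b j \<bullet> (minv M *\<^sub>v b j))"
      using e[OF bc[OF j]] scalar_prod_smult_distrib[OF bc[OF j] mc] by simp
  qed simp
  also have "\<dots> = (1 / c) * tr (minv M * M)"
    using tr_W[OF pd_minv(1)[OF pM], of "\<lambda>_. 1"] by (simp add: sum_distrib_left)
  also have "minv M * M = 1\<^sub>m n" using pd_minv(3)[OF pM] .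
  finally show ?thesis by (simp add: tr_one)
qed

lemma iterate:
  assumes n0: "n > 0" and dU: "dU > 0" and dL: "dL > 0" and dLe: "dL * eL < 1"
    and gap: "1 / dU + eU < 1 / dL - eL" and eU: "eU > 0" and eL: "eL > 0"
  shows "\<exists>s. (\<forall>j. s j \<ge> 0) \<and> (\<forall>j. j \<notin> J \<longrightarrow> s j = 0) \<and> card {j\<in>J. s j \<noteq> 0} \<le> k \<and>
     pd n (W (\<lambda>j. (real n / eU + real k * dU) - s j)) \<and>
     pd n (W (\<lambda>j. s j - (- real n / eL + real k * dL))) \<and>
     Phi (\<lambda>j. (real n / eU + real k * dU) - s j) \<le> eU \<and>
     Phi (\<lambda>j. s j - (- real n / eL + real k * dL)) \<le> eL"
proof (induction k)
  case 0
  have u0: "real n / eU > 0" using n0 eU by simp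
  have l0: "real n / eL > 0" using n0 eL by simp
  have f1: "(\<lambda>j. (real n / eU + real 0 * dU) - (\<lambda>_. 0::real) j) = (\<lambda>_. real n / eU)" by simp
  have f2: "(\<lambda>j. (\<lambda>_. 0::real) j - (- real n / eL + real 0 * dL)) = (\<lambda>_. real n / eL)" by simp
  show ?case
    apply (rule exI[of _ "\<lambda>_. 0"])
    apply (simp only: f1 f2)
    using pd_const[OF u0] pd_const[OF l0] Phi_const[OF u0] Phi_const[OF l0] n0 eU eL
    by simp
next
  case (Suc k)
  then obtain s where s0: "\<forall>j. s j \<ge> 0" and sJ: "\<forall>j. j \<notin> J \<longrightarrow> s j = 0"
    and sc: "card {j\<in>J. s j \<noteq> 0} \<le> k"
    and p1: "pd n (W (\<lambda>j. (real n / eU + real k * dU) - s j))"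
    and p2: "pd n (W (\<lambda>j. s j - (- real n / eL + real k * dL)))"
    and p3: "Phi (\<lambda>j. (real n / eU + real k * dU) - s j) \<le> eU"
    and p4: "Phi (\<lambda>j. s j - (- real n / eL + real k * dL)) \<le> eL" by blast
  obtain i t where i: "i \<in> J" and t: "t > 0"
    and q1: "pd n (W (\<lambda>j. (real n / eU + real k * dU + dU) - (s(i := s i + t)) j))"
    and q2: "pd n (W (\<lambda>j. (s(i := s i + t)) j - (- real n / eL + real k * dL + dL)))"
    and q3: "Phi (\<lambda>j. (real n / eU + real k * dU + dU) - (s(i := s i + t)) j) \<le> eU"
    and q4: "Phi (\<lambda>j. (s(i := s i + t)) j - (- real n / eL + real k * dL + dL)) \<le> eL"
    using step[OF n0 p1 p2 p3 p4 dU dL dLe gap] by blast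
  have r1: "real n / eU + real k * dU + dU = real n / eU + real (Suc k) * dU" by (simp add: algebra_simps)
  have r2: "- real n / eL + real k * dL + dL = - real n / eL + real (Suc k) * dL" by (simp add: algebra_simps)
  have sub: "{j\<in>J. (s(i := s i + t)) j \<noteq> 0} \<subseteq> insert i {j\<in>J. s j \<noteq> 0}" by auto
  have "card {j\<in>J. (s(i := s i + t)) j \<noteq> 0} \<le> card (insert i {j\<in>J. s j \<noteq> 0})"
    by (rule card_mono) (use finJ in auto)
  also have "\<dots> \<le> Suc (card {j\<in>J. s j \<noteq> 0})" using finJ by (simp add: card_insert_if)
  also have "\<dots> \<le> Suc k" using sc by simp
  finally have cc: "card {j\<in>J. (s(i := s i + t)) j \<noteq> 0} \<le> Suc k" .
  show ?case
    apply (rule exI[of _ "s(i := s i + t)"])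
    using q1 q2 q3 q4 cc s0 sJ i t unfolding r1 r2
    by (auto simp: add_nonneg_nonneg less_imp_le)
qed

lemma final_arith:
  fixes e N q :: real
  assumes e: "0 < e" "e < 1" and N: "N \<ge> 0" and q: "q \<ge> 18 * N / e^2"
  shows "(1 - e) * (N / (e / 10 / 2) + q * (1 + 3 * (e / 10))) \<le> (1 + e) * (- N / (e / 10) + q * 1)"
proof -
  have q0: "q \<ge> 0" using q N e by (meson divide_nonneg_pos order_trans mult_nonneg_nonneg zero_le_numeral zero_less_power)
  have "q * e \<ge> 18 * N / e" using q e by (simp add: field_simps power2_eq_square)
  then have "(17/10) * (18 * N / e) \<le> (17/10) * (q * e)" by simp
  moreover have "30.6 * N / e = (17/10) * (18 * N / e)" by simp
  moreover have "q * (17/10 * e) = (17/10) * (q * e)" by simp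
  ultimately have h1: "q * (17/10 * e) \<ge> 30.6 * N / e" by linarith
  have h2: "30.6 * N / e \<ge> N / e * (30 - 10 * e)" using e N by (simp add: field_simps)
  have h3: "q * (3/10 * e^2) \<ge> 0" using q0 by simp
  have lhs: "(1 + e) * (- N / (e / 10) + q * 1) - (1 - e) * (N / (e / 10 / 2) + q * (1 + 3 * (e / 10)))
      = q * (17/10 * e) + q * (3/10 * e^2) - N / e * (30 - 10 * e)"
    using e by (simp add: field_simps power2_eq_square)
  show ?thesis using lhs h1 h2 h3 by linarith
qed

lemma bss_main:
  assumes n0: "n > 0" and e: "0 < \<epsilon>" "\<epsilon> < 1"
  shows "\<exists>s. (\<forall>j. s j \<ge> 0) \<and> (\<forall>j. j \<notin> J \<longrightarrow> s j = 0) \<and>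
     real (card {j\<in>J. s j \<noteq> 0}) \<le> 19 * real n / \<epsilon>^2 \<and>
     (\<forall>x\<in>carrier_vec n. (1 - \<epsilon>) * qf M x \<le> (\<Sum>j\<in>J. s j * (b j \<bullet> x)^2) \<and>
        (\<Sum>j\<in>J. s j * (b j \<bullet> x)^2) \<le> (1 + \<epsilon>) * qf M x)"
proof -
  define \<gamma> where "\<gamma> = \<epsilon> / 10"
  have g0: "\<gamma> > 0" "\<gamma> < 1/10" using e unfolding \<gamma>_def by auto
  define dU where "dU = 1 + 3 * \<gamma>"
  define eU where "eU = \<gamma> / 2"
  define dL :: real where "dL = 1"
  define eL where "eL = \<gamma>"
  have dU0: "dU > 0" using g0 unfolding dU_def by simp
  have dL0: "dL > 0" unfolding dL_def by simp
  have dLe: "dL * eL < 1" using g0 unfolding dL_def eL_def by simp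
  have eU0: "eU > 0" using g0 unfolding eU_def by simp
  have eL0: "eL > 0" using g0 unfolding eL_def by simp
  have gap: "1 / dU + eU < 1 / dL - eL"
  proof -
    have "1 < (1 - 3 * \<gamma> / 2) * (1 + 3 * \<gamma>)" using g0 by (simp add: algebra_simps power2_eq_square)
    then have "1 / (1 + 3 * \<gamma>) < 1 - 3 * \<gamma> / 2" using g0 by (simp add: field_simps)
    then show ?thesis unfolding dU_def eU_def dL_def eL_def by simp
  qed
  define q where "q = nat \<lceil>18 * real n / \<epsilon>^2\<rceil>"
  have qge: "real q \<ge> 18 * real n / \<epsilon>^2" unfolding q_def by linarith
  have qle: "real q \<le> 19 * real n / \<epsilon>^2"
  proof -
    have "real q \<le> 18 * real n / \<epsilon>^2 + 1" unfolding q_def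
      using e by (simp add: of_nat_nat)
    moreover have "1 \<le> real n / \<epsilon>^2"
    proof -
      have "\<epsilon>^2 \<le> 1" using e by (simp add: power_le_one)
      also have "1 \<le> real n" using n0 by simp
      finally show ?thesis using e by (simp add: field_simps)
    qed
    moreover have "19 * real n / \<epsilon>^2 = 18 * real n / \<epsilon>^2 + real n / \<epsilon>^2"
      by (simp add: add_divide_distrib[symmetric])
    ultimately show ?thesis by linarith
  qed
  obtain s where s0: "\<forall>j. s j \<ge> 0" and sJ: "\<forall>j. j \<notin> J \<longrightarrow> s j = 0"
    and sc: "card {j\<in>J. s j \<noteq> 0} \<le> q"
    and p1: "pd n (W (\<lambda>j. (real n / eU + real q * dU) - s j))"
    and p2: "pd n (W (\<lambda>j. s j - (- real n / eL + real q * dL)))"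
    using iterate[OF n0 dU0 dL0 dLe gap eU0 eL0, of q] by blast
  define u where "u = real n / eU + real q * dU"
  define l where "l = - real n / eL + real q * dL"
  have N0: "real n \<ge> 0" by simp
  have ul: "(1 - \<epsilon>) * u \<le> (1 + \<epsilon>) * l"
    unfolding u_def l_def dU_def eU_def dL_def eL_def \<gamma>_def
    by (rule final_arith[OF e N0 qge])
  have u0: "u > 0" unfolding u_def using eU0 dU0 n0 by (simp add: add_pos_nonneg)
  define c where "c = (1 + \<epsilon>) / u"
  have c0: "c > 0" unfolding c_def using u0 e by simp
  define S where "S x = (\<Sum>j\<in>J. s j * (b j \<bullet> x)^2)" for x
  have up: "S x \<le> u * qf M x" if x: "x \<in> carrier_vec n" for x
  proof -
    have "qf (W (\<lambda>j. u - s j)) x \<ge> 0" using pd_psd[OF p1[folded u_def]] x unfolding psd_def by blast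
    then show ?thesis unfolding S_def using x by (simp add: qf_W algebra_simps sum_subtractf sum_distrib_left)
  qed
  have lo: "l * qf M x \<le> S x" if x: "x \<in> carrier_vec n" for x
  proof -
    have "qf (W (\<lambda>j. s j - l)) x \<ge> 0" using pd_psd[OF p2[folded l_def]] x unfolding psd_def by blast
    then show ?thesis unfolding S_def using x by (simp add: qf_W algebra_simps sum_subtractf sum_distrib_left)
  qed
  show ?thesis
  proof (rule exI[of _ "\<lambda>j. c * s j"], intro conjI allI impI ballI)
    fix j show "c * s j \<ge> 0" using c0 s0 by simp
  next
    fix j assume "j \<notin> J" then show "c * s j = 0" using sJ by simp
  next
    have "{j\<in>J. c * s j \<noteq> 0} = {j\<in>J. s j \<noteq> 0}" using c0 by auto
    then show "real (card {j\<in>J. c * s j \<noteq> 0}) \<le> 19 * real n / \<epsilon>^2" using sc qle by simp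
  next
    fix x :: "real vec" assume x: "x \<in> carrier_vec n"
    have Sc: "(\<Sum>j\<in>J. c * s j * (b j \<bullet> x)^2) = c * S x" unfolding S_def by (simp add: sum_distrib_left mult.assoc)
    have qM: "qf M x \<ge> 0" using M_qf_nonneg[OF x] .
    have "c * S x \<le> c * (u * qf M x)" using up[OF x] c0 by (intro mult_left_mono) auto
    also have "\<dots> = (1 + \<epsilon>) * qf M x" unfolding c_def using u0 by simp
    finally show "(\<Sum>j\<in>J. c * s j * (b j \<bullet> x)^2) \<le> (1 + \<epsilon>) * qf M x" unfolding Sc .
    have "(1 - \<epsilon>) * qf M x \<le> c * l * qf M x"
    proof -
      have "(1 - \<epsilon>) \<le> c * l" unfolding c_def using ul u0 by (simp add: field_simps)
      then show ?thesis using qM by (intro mult_right_mono) auto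
    qed
    also have "\<dots> \<le> c * S x" using lo[OF x] c0 by (simp add: mult.assoc)
    finally show "(1 - \<epsilon>) * qf M x \<le> (\<Sum>j\<in>J. c * s j * (b j \<bullet> x)^2)" unfolding Sc .
  qed
qed

end

definition Qf :: "('u \<times> 'u) set \<Rightarrow> ('u \<times> 'u \<Rightarrow> real) \<Rightarrow> ('u \<Rightarrow> real) \<Rightarrow> real" where
  "Qf F w y = (\<Sum>e\<in>F. w e * (y (fst e) - y (snd e))^2)"

lemma ind_sum:
  fixes x :: "real vec"
  assumes "P \<Longrightarrow> k < n"
  shows "(\<Sum>i<n. (if P \<and> k = i then 1 else 0) * x $ i) = (if P then x $ k else 0)"
proof -
  have "(\<Sum>i<n. (if P \<and> k = i then 1 else 0) * x $ i) = (\<Sum>i<n. if k = i then (if P then x $ i else 0) else 0)"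
    by (rule sum.cong) auto
  also have "\<dots> = (if P then x $ k else 0)" using assms by (simp add: sum.delta)
  finally show ?thesis .
qed

lemma conn_case:
  fixes U :: "'u set" and F :: "('u \<times> 'u) set" and w :: "'u \<times> 'u \<Rightarrow> real"
  assumes U: "finite U" and FU: "F \<subseteq> U \<times> U" and wpos: "\<forall>e\<in>F. w e > 0"
    and e: "0 < \<epsilon>" "\<epsilon> < 1" and U2: "card U \<ge> 2"
    and conn: "\<forall>S. S \<subseteq> U \<longrightarrow> (\<forall>e\<in>F. fst e \<in> S \<longleftrightarrow> snd e \<in> S) \<longrightarrow> S = {} \<or> S = U"
  shows "\<exists>F' w'. F' \<subseteq> F \<and> (\<forall>e\<in>F'. w' e > 0) \<and> real (card F') \<le> 19 * real (card U) / \<epsilon>^2 \<and>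
    (\<forall>y. (1 - \<epsilon>) * Qf F w y \<le> Qf F' w' y \<and> Qf F' w' y \<le> (1 + \<epsilon>) * Qf F w y)"
proof -
  have "U \<noteq> {}" using U2 by auto
  then obtain r where r: "r \<in> U" by blast
  define n where "n = card U - 1"
  define U' where "U' = U - {r}"
  have cU': "card U' = n" unfolding U'_def n_def using r U by simp
  have n0: "n > 0" unfolding n_def using U2 by simp
  obtain h where h: "bij_betw h {0..<n} U'"
    using finite_same_card_bij[of "{0..<n}" U'] cU' U unfolding U'_def by auto
  define g where "g = inv_into {0..<n} h"
  have gU: "g a < n" "h (g a) = a" if "a \<in> U'" for a
    using that h unfolding g_def bij_betw_def
    by (auto intro: inv_into_into[of a h "{0..<n}", simplified] f_inv_into_f)
  have hU: "h i \<in> U'" "g (h i) = i" if "i < n" for i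
    using that h unfolding g_def bij_betw_def by (auto intro: inv_into_f_f)
  have FF: "finite F" using U FU by (meson finite_SigmaI finite_subset)
  define ind where "ind a i = (if a \<in> U' \<and> g a = i then 1 else (0::real))" for a i
  define b where "b e = vec n (\<lambda>i. sqrt (w e) * (ind (fst e) i - ind (snd e) i))" for e
  define xt where "xt x a = (if a \<in> U' then x $ g a else 0)" for x :: "real vec" and a
  have bc: "b e \<in> carrier_vec n" for e unfolding b_def by simp
  have indsum: "(\<Sum>i<n. ind a i * x $ i) = xt x a" for a x
    unfolding ind_def xt_def by (rule ind_sum) (use gU(1) in auto)
  have bdot: "b e \<bullet> x = sqrt (w e) * (xt x (fst e) - xt x (snd e))" if x: "x \<in> carrier_vec n" for e x
  proof -
    have "b e \<bullet> x = (\<Sum>i<n. sqrt (w e) * (ind (fst e) i * x $ i - ind (snd e) i * x $ i))"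
      unfolding b_def using x by (simp add: scalar_prod_def atLeast0LessThan algebra_simps)
    also have "\<dots> = sqrt (w e) * ((\<Sum>i<n. ind (fst e) i * x $ i) - (\<Sum>i<n. ind (snd e) i * x $ i))"
      by (simp only: sum_distrib_left[symmetric] sum_subtractf)
    finally show ?thesis unfolding indsum .
  qed
  have Mpos: "(\<Sum>e\<in>F. (b e \<bullet> x)^2) > 0" if x: "x \<in> carrier_vec n" "x \<noteq> 0\<^sub>v n" for x
  proof (rule ccontr)
    assume "\<not> ?thesis"
    then have "(\<Sum>e\<in>F. (b e \<bullet> x)^2) = 0" by (meson sum_nonneg zero_le_power2 not_less order_antisym)
    then have z: "\<forall>e\<in>F. (b e \<bullet> x)^2 = 0"
      using sum_nonneg_eq_0_iff[OF FF, of "\<lambda>e. (b e \<bullet> x)^2"] by (simp del: power_eq_0_iff)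
    have eq: "xt x (fst e) = xt x (snd e)" if "e \<in> F" for e
    proof -
      have "sqrt (w e) > 0" using wpos that by simp
      moreover have "sqrt (w e) * (xt x (fst e) - xt x (snd e)) = 0" using z that bdot[OF x(1)] by simp
      ultimately show ?thesis by simp
    qed
    define S where "S = {v\<in>U. xt x v = 0}"
    have "S \<subseteq> U" unfolding S_def by auto
    moreover have "\<forall>e\<in>F. fst e \<in> S \<longleftrightarrow> snd e \<in> S" unfolding S_def using eq FU by auto
    ultimately have "S = {} \<or> S = U" using conn by blast
    moreover have "r \<in> S" unfolding S_def xt_def U'_def using r by simp
    ultimately have SU: "S = U" by auto
    have "x = 0\<^sub>v n"
    proof (rule eq_vecI)
      fix i assume "i < dim_vec (0\<^sub>v n :: real vec)"
      then have i: "i < n" by simp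
      have "h i \<in> S" using SU hU(1)[OF i] unfolding U'_def by auto
      then have "xt x (h i) = 0" unfolding S_def by simp
      then show "x $ i = 0\<^sub>v n $ i" using hU[OF i] i unfolding xt_def by simp
    qed (use x in simp)
    with x(2) show False by simp
  qed
  interpret B: bss n F b
    by unfold_locales (use FF bc Mpos in auto)
  obtain s where s0: "\<forall>j. s j \<ge> 0" and sc: "real (card {j\<in>F. s j \<noteq> 0}) \<le> 19 * real n / \<epsilon>^2"
    and sq: "\<forall>x\<in>carrier_vec n. (1 - \<epsilon>) * qf B.M x \<le> (\<Sum>j\<in>F. s j * (b j \<bullet> x)^2) \<and>
        (\<Sum>j\<in>F. s j * (b j \<bullet> x)^2) \<le> (1 + \<epsilon>) * qf B.M x"
    using B.bss_main[OF n0 e] by blast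
  define F' where "F' = {j\<in>F. s j \<noteq> 0}"
  define w' where "w' e = s e * w e" for e
  show ?thesis
  proof (rule exI[of _ F'], rule exI[of _ w'], intro conjI allI ballI)
    show "F' \<subseteq> F" unfolding F'_def by auto
  next
    fix e assume "e \<in> F'"
    then have e1: "s e \<noteq> 0" "e \<in> F" unfolding F'_def by auto
    have "s e \<ge> 0" using s0 by blast
    then have "s e > 0" "w e > 0" using e1 wpos by auto
    then show "w' e > 0" unfolding w'_def by simp
  next
    have "real n \<le> real (card U)" unfolding n_def by simp
    then have "19 * real n / \<epsilon>^2 \<le> 19 * real (card U) / \<epsilon>^2" using e by (simp add: divide_right_mono)
    then show "real (card F') \<le> 19 * real (card U) / \<epsilon>^2" using sc unfolding F'_def by simp
  next
    fix y :: "'u \<Rightarrow> real"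
    define x where "x = vec n (\<lambda>i. y (h i) - y r)"
    have xc: "x \<in> carrier_vec n" unfolding x_def by simp
    have xtv: "xt x v = y v - y r" if "v \<in> U" for v
    proof (cases "v \<in> U'")
      case True then show ?thesis unfolding xt_def x_def using gU[OF True] by simp
    next
      case False then have "v = r" using that unfolding U'_def by simp
      then show ?thesis unfolding xt_def using False by simp
    qed
    have be: "(b e \<bullet> x)^2 = w e * (y (fst e) - y (snd e))^2" if "e \<in> F" for e
    proof -
      have "fst e \<in> U" "snd e \<in> U" using that FU by auto
      then have "b e \<bullet> x = sqrt (w e) * (y (fst e) - y (snd e))" using bdot[OF xc] xtv by simp
      moreover have "w e \<ge> 0" using wpos that by auto
      ultimately show ?thesis by (simp add: power_mult_distrib)
    qed
    have QF: "qf B.M x = Qf F w y"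
      unfolding Qf_def using B.qf_W[OF xc] be by simp
    have QF': "(\<Sum>j\<in>F. s j * (b j \<bullet> x)^2) = Qf F' w' y"
    proof -
      have "(\<Sum>j\<in>F. s j * (b j \<bullet> x)^2) = (\<Sum>j\<in>F. if s j \<noteq> 0 then w' j * (y (fst j) - y (snd j))^2 else 0)"
        by (rule sum.cong) (auto simp: be w'_def)
      also have "\<dots> = Qf F' w' y" unfolding Qf_def F'_def
        by (rule sum.inter_filter[OF FF, symmetric])
      finally show ?thesis .
    qed
    show "(1 - \<epsilon>) * Qf F w y \<le> Qf F' w' y" using sq xc QF QF' by auto
    show "Qf F' w' y \<le> (1 + \<epsilon>) * Qf F w y" using sq xc QF QF' by auto
  qed
qed

lemma Qf_union:
  assumes "finite A" "finite B" "A \<inter> B = {}"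
  shows "Qf (A \<union> B) w y = Qf A w y + Qf B w y"
  unfolding Qf_def using assms by (simp add: sum.union_disjoint)

lemma csq:
  fixes U :: "'u set" and F :: "('u \<times> 'u) set" and w :: "'u \<times> 'u \<Rightarrow> real"
  assumes "finite U" "F \<subseteq> U \<times> U" "\<forall>e\<in>F. w e > 0" "0 < \<epsilon>" "\<epsilon> < 1"
  shows "\<exists>F' w'. F' \<subseteq> F \<and> (\<forall>e\<in>F'. w' e > 0) \<and> real (card F') \<le> 19 * real (card U) / \<epsilon>^2 \<and>
    (\<forall>y. (1 - \<epsilon>) * Qf F w y \<le> Qf F' w' y \<and> Qf F' w' y \<le> (1 + \<epsilon>) * Qf F w y)"
  using assms
proof (induction "card U" arbitrary: U F w rule: less_induct)
  case less
  note U = less.prems(1) and FU = less.prems(2) and wpos = less.prems(3) and e = less.prems(4,5)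
  have FF: "finite F" using U FU by (meson finite_SigmaI finite_subset)
  show ?case
  proof (cases "\<exists>S. S \<subseteq> U \<and> (\<forall>e\<in>F. fst e \<in> S \<longleftrightarrow> snd e \<in> S) \<and> S \<noteq> {} \<and> S \<noteq> U")
    case True
    then obtain S where S: "S \<subseteq> U" "\<forall>e\<in>F. fst e \<in> S \<longleftrightarrow> snd e \<in> S" "S \<noteq> {}" "S \<noteq> U" by blast
    define F1 where "F1 = {e\<in>F. fst e \<in> S}"
    define F2 where "F2 = {e\<in>F. fst e \<notin> S}"
    have F1S: "F1 \<subseteq> S \<times> S" unfolding F1_def using S(2) by (auto simp: mem_Times_iff)
    have F2S: "F2 \<subseteq> (U - S) \<times> (U - S)" unfolding F2_def using S(2) FU by (auto simp: mem_Times_iff)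
    have "S \<subset> U" using S(1,4) by blast
    then have c1: "card S < card U" using U by (rule psubset_card_mono[rotated])
    have "U - S \<subset> U" using S(1,3) by blast
    then have c2: "card (U - S) < card U" using U by (rule psubset_card_mono[rotated])
    have fS: "finite S" using S(1) U finite_subset by blast
    obtain F1' w1' where R1: "F1' \<subseteq> F1" "\<forall>e\<in>F1'. w1' e > 0" "real (card F1') \<le> 19 * real (card S) / \<epsilon>^2"
      "\<forall>y. (1 - \<epsilon>) * Qf F1 w y \<le> Qf F1' w1' y \<and> Qf F1' w1' y \<le> (1 + \<epsilon>) * Qf F1 w y"
      using less.hyps[OF c1 fS F1S _ e, of w] wpos unfolding F1_def by blast
    obtain F2' w2' where R2: "F2' \<subseteq> F2" "\<forall>e\<in>F2'. w2' e > 0" "real (card F2') \<le> 19 * real (card (U - S)) / \<epsilon>^2"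
      "\<forall>y. (1 - \<epsilon>) * Qf F2 w y \<le> Qf F2' w2' y \<and> Qf F2' w2' y \<le> (1 + \<epsilon>) * Qf F2 w y"
      using less.hyps[OF c2 _ F2S _ e, of w] U wpos unfolding F2_def by blast
    have F12: "F = F1 \<union> F2" "F1 \<inter> F2 = {}" unfolding F1_def F2_def by auto
    have fin1: "finite F1" "finite F2" using FF F12 by auto
    have fin1': "finite F1'" "finite F2'" using fin1 R1(1) R2(1) finite_subset by auto
    have dis': "F1' \<inter> F2' = {}" using R1(1) R2(1) F12(2) by auto
    define w' where "w' e = (if e \<in> F1' then w1' e else w2' e)" for e
    have Qs: "Qf (F1' \<union> F2') w' y = Qf F1' w1' y + Qf F2' w2' y" for y
    proof -
      have "Qf (F1' \<union> F2') w' y = Qf F1' w' y + Qf F2' w' y" by (rule Qf_union[OF fin1' dis'])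
      moreover have "Qf F1' w' y = Qf F1' w1' y" unfolding Qf_def w'_def by (rule sum.cong) auto
      moreover have "Qf F2' w' y = Qf F2' w2' y" unfolding Qf_def w'_def using dis' by (intro sum.cong) auto
      ultimately show ?thesis by simp
    qed
    have Qo: "Qf F w y = Qf F1 w y + Qf F2 w y" for y unfolding F12(1) by (rule Qf_union[OF fin1 F12(2)])
    have cU: "card U = card S + card (U - S)" using U S(1) fS card_mono[OF U S(1)] by (simp add: card_Diff_subset)
    show ?thesis
    proof (rule exI[of _ "F1' \<union> F2'"], rule exI[of _ w'], intro conjI allI ballI)
      show "F1' \<union> F2' \<subseteq> F" using R1(1) R2(1) F12 by auto
    next
      fix e assume "e \<in> F1' \<union> F2'" then show "w' e > 0" unfolding w'_def using R1(2) R2(2) by auto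
    next
      have "real (card (F1' \<union> F2')) \<le> real (card F1') + real (card F2')"
        using card_Un_le[of F1' F2'] by linarith
      also have "\<dots> \<le> 19 * real (card S) / \<epsilon>^2 + 19 * real (card (U - S)) / \<epsilon>^2" using R1(3) R2(3) by simp
      also have "\<dots> = 19 * real (card U) / \<epsilon>^2" unfolding cU by (simp add: add_divide_distrib algebra_simps)
      finally show "real (card (F1' \<union> F2')) \<le> 19 * real (card U) / \<epsilon>^2" .
    next
      fix y
      show "(1 - \<epsilon>) * Qf F w y \<le> Qf (F1' \<union> F2') w' y" unfolding Qs Qo using R1(4) R2(4)
        by (smt (verit, ccfv_threshold) distrib_left)
      show "Qf (F1' \<union> F2') w' y \<le> (1 + \<epsilon>) * Qf F w y" unfolding Qs Qo using R1(4) R2(4)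
        by (smt (verit, ccfv_threshold) distrib_left)
    qed
  next
    case False
    then have conn: "\<forall>S. S \<subseteq> U \<longrightarrow> (\<forall>e\<in>F. fst e \<in> S \<longleftrightarrow> snd e \<in> S) \<longrightarrow> S = {} \<or> S = U" by blast
    show ?thesis
    proof (cases "card U \<ge> 2")
      case True then show ?thesis using conn_case[OF U FU wpos e True conn] by blast
    next
      case False
      then have "card U \<le> 1" by simp
      then have one: "\<forall>a\<in>U. \<forall>c\<in>U. a = c" using card_le_Suc0_iff_eq[OF U] by simp
      have Q0: "Qf F w y = 0" for y unfolding Qf_def
      proof (rule sum.neutral, rule ballI)
        fix e assume "e \<in> F"
        then have "fst e \<in> U" "snd e \<in> U" using FU by auto
        then have "fst e = snd e" using one by blast
        then show "w e * (y (fst e) - y (snd e))^2 = 0" by simp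
      qed
      show ?thesis
        by (rule exI[of _ "{}"], rule exI[of _ w]) (use e Q0 in \<open>simp add: Qf_def\<close>)
    qed
  qed
qed

lemma card2_other:
  assumes "card B = 2" "x \<in> B" shows "\<exists>y\<in>B. y \<noteq> x"
proof (rule ccontr)
  assume "\<not> ?thesis"
  then have "B \<subseteq> {x}" by auto
  then have "card B \<le> 1" using card_mono[of "{x}" B] by simp
  with assms show False by simp
qed

lemma singleton_facts:
  assumes "has_singleton_2x2 D E P"
  shows "\<exists>b1 b2 c1 c2. b1 \<in> D \<and> b2 \<in> D \<and> c1 \<in> E \<and> c2 \<in> E \<and>
    P b1 c1 \<and> \<not> P b1 c2 \<and> \<not> P b2 c1 \<and> \<not> P b2 c2"
proof -
  obtain B C where B: "B \<subseteq> D" "card B = 2" and C: "C \<subseteq> E" "card C = 2"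
    and one: "card {(b, c). b \<in> B \<and> c \<in> C \<and> P b c} = 1"
    using assms unfolding has_singleton_2x2_def by blast
  obtain p where p: "{(b, c). b \<in> B \<and> c \<in> C \<and> P b c} = {p}" using one card_1_singletonE by blast
  obtain b1 c1 where p': "p = (b1, c1)" by (cases p)
  have in1: "b1 \<in> B" "c1 \<in> C" "P b1 c1" using p p' by auto
  obtain b2 where b2: "b2 \<in> B" "b2 \<noteq> b1" using card2_other[OF B(2) in1(1)] by blast
  obtain c2 where c2: "c2 \<in> C" "c2 \<noteq> c1" using card2_other[OF C(2) in1(2)] by blast
  have nP: "\<not> P x y" if "x \<in> B" "y \<in> C" "(x, y) \<noteq> (b1, c1)" for x y
    using p p' that by auto
  show ?thesis
    apply (rule exI[of _ b1], rule exI[of _ b2], rule exI[of _ c1], rule exI[of _ c2])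
    using in1 b2 c2 B C nP[of b1 c2] nP[of b2 c1] nP[of b2 c2] by auto
qed

lemma part1:
  assumes "has_singleton_2x2 D E P" "0 < \<epsilon>" "\<epsilon> < 1"
  shows "\<exists>c::real. c > 0 \<and> (\<forall>N::nat. \<exists>n\<ge>N. \<exists>(V::nat set) Cs w.
                 card V = n \<and> csp_instance V Cs w \<and>
                 (\<forall>Cs' w'. is_sparsifier D E P \<epsilon> V Cs w Cs' w' \<longrightarrow>
                     real (card Cs') \<ge> c * real n ^ 2))"
proof -
  obtain b1 b2 c1 c2 where bc: "b1 \<in> D" "b2 \<in> D" "c1 \<in> E" "c2 \<in> E"
    and PP: "P b1 c1" "\<not> P b1 c2" "\<not> P b2 c1" "\<not> P b2 c2"
    using singleton_facts[OF assms(1)] by blast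
  show ?thesis
  proof (rule exI[of _ "1/4"], intro conjI allI)
    fix N :: nat
    define m where "m = Suc N"
    define V where "V = {0..<2*m}"
    define Cs where "Cs = {0..<m} \<times> {m..<2*m}"
    define w :: "nat \<times> nat \<Rightarrow> real" where "w = (\<lambda>_. 1)"
    have cV: "card V = 2 * m" unfolding V_def by simp
    have inst: "csp_instance V Cs w"
      unfolding csp_instance_def V_def Cs_def w_def by auto
    have fCs: "finite Cs" unfolding Cs_def by simp
    have cCs: "card Cs = m * m" unfolding Cs_def by (simp add: card_cartesian_product)
    have all: "Cs \<subseteq> Cs'" if sp: "is_sparsifier D E P \<epsilon> V Cs w Cs' w'" for Cs' w'
    proof
      fix x assume x: "x \<in> Cs"
      obtain p q where pq: "x = (p, q)" by (cases x)
      have p: "p < m" and q: "m \<le> q" "q < 2*m" using x pq unfolding Cs_def by auto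
      define A where "A v = (if v < m then (if v = p then b1 else b2) else (if v = q then c1 else c2))" for v
      have valid: "valid_assignment D E V Cs A"
        unfolding valid_assignment_def A_def V_def Cs_def using bc by auto
      have PA: "P (A u) (A v) \<longleftrightarrow> (u, v) = (p, q)" if "(u, v) \<in> Cs" for u v
        using that PP q unfolding Cs_def A_def by auto
      have sub: "Cs' \<subseteq> Cs" using sp unfolding is_sparsifier_def by blast
      have fCs': "finite Cs'" using finite_subset[OF sub fCs] .
      have val: "csp_val P Cs w A = 1"
      proof -
        have "csp_val P Cs w A = (\<Sum>y\<in>Cs. if y = (p, q) then (1::real) else 0)"
          unfolding csp_val_def w_def
        proof (rule sum.cong)
          fix y assume y: "y \<in> Cs"
          obtain u v where uv: "y = (u, v)" by (cases y)
          show "(case y of (u, v) \<Rightarrow> (1::real) * (if P (A u) (A v) then 1 else 0)) = (if y = (p, q) then 1 else 0)"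
            using PA[of u v] y uv by simp
        qed simp
        also have "\<dots> = (if (p, q) \<in> Cs then 1 else 0)" by (rule sum.delta[OF fCs])
        also have "\<dots> = 1" using x pq by simp
        finally show ?thesis .
      qed
      have val': "csp_val P Cs' w' A = (\<Sum>y\<in>Cs'. if y = (p, q) then w' y else 0)"
        unfolding csp_val_def
      proof (rule sum.cong)
        fix y assume y: "y \<in> Cs'"
        obtain u v where uv: "y = (u, v)" by (cases y)
        show "(case y of (u, v) \<Rightarrow> w' (u, v) * (if P (A u) (A v) then 1 else 0)) = (if y = (p, q) then w' y else 0)"
          using PA[of u v] y uv sub by auto
      qed simp
      have "(1 - \<epsilon>) * csp_val P Cs w A \<le> csp_val P Cs' w' A"
        using sp valid unfolding is_sparsifier_def by blast
      then have "0 < csp_val P Cs' w' A" using val assms by simp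
      then show "x \<in> Cs'" using val' pq fCs' by (cases "(p, q) \<in> Cs'") auto
    qed
    show "\<exists>n\<ge>N. \<exists>(V::nat set) Cs w. card V = n \<and> csp_instance V Cs w \<and>
                 (\<forall>Cs' w'. is_sparsifier D E P \<epsilon> V Cs w Cs' w' \<longrightarrow>
                     real (card Cs') \<ge> 1/4 * real n ^ 2)"
    proof (rule exI[of _ "2*m"], intro conjI, simp add: m_def, rule exI[of _ V], rule exI[of _ Cs], rule exI[of _ w],
        intro conjI allI impI)
      show "card V = 2 * m" by (rule cV)
      show "csp_instance V Cs w" by (rule inst)
      fix Cs' w' assume sp: "is_sparsifier D E P \<epsilon> V Cs w Cs' w'"
      have "Cs' = Cs" using all[OF sp] sp unfolding is_sparsifier_def by blast
      then have "real (card Cs') = real m * real m" using cCs by simp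
      then show "real (card Cs') \<ge> 1/4 * real (2*m) ^ 2" by (simp add: power2_eq_square)
    qed
  qed simp
qed

lemma sq_ind:
  assumes L: "finite L" and p: "p \<in> L" and q: "q \<in> L"
  shows "(\<Sum>c\<in>L. ((if p = c then 1 else 0) - (if q = c then 1 else 0))^2) = (if p = q then 0 else (2::real))"
proof (cases "p = q")
  case True then show ?thesis by simp
next
  case False
  have "(\<Sum>c\<in>L. ((if p = c then 1 else 0) - (if q = c then 1 else 0))^2) =
        (\<Sum>c\<in>L. (if p = c then 1 else 0) + (if q = c then (1::real) else 0))"
    by (rule sum.cong) (use False in auto)
  also have "\<dots> = 2" using L p q by (simp add: sum.distrib)
  finally show ?thesis using False by simp
qed

lemma singleton_from:
  assumes a: "a1 \<in> D" "a2 \<in> D" and bb: "b \<in> E" "b' \<in> E"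
    and P: "\<not> P a1 b" "\<not> P a2 b" "\<not> P a1 b'" "P a2 b'"
  shows "has_singleton_2x2 D E P"
proof -
  have ne: "a1 \<noteq> a2" "b \<noteq> b'" using P by auto
  have S: "{(x, y). x \<in> {a1, a2} \<and> y \<in> {b, b'} \<and> P x y} = {(a2, b')}" using P by auto
  show ?thesis unfolding has_singleton_2x2_def
    by (rule exI[of _ "{a1, a2}"], rule exI[of _ "{b, b'}"]) (use a bb ne S in auto)
qed

lemma struct_nosingle:
  assumes ns: "\<not> has_singleton_2x2 D E P"
  shows "\<exists>(lab1 :: 'a \<Rightarrow> 'a set option) lab2. \<forall>a\<in>D. \<forall>b\<in>E. (P a b \<longleftrightarrow> lab1 a \<noteq> lab2 b)"
proof -
  define Z where "Z a = {b\<in>E. \<not> P a b}" for a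
  have half: "Z a1 \<subseteq> Z a2" if "a1 \<in> D" "a2 \<in> D" "b \<in> Z a1" "b \<in> Z a2" for a1 a2 b
  proof
    fix b' assume b': "b' \<in> Z a1"
    show "b' \<in> Z a2"
    proof (rule ccontr)
      assume "b' \<notin> Z a2"
      then have "P a2 b'" using b' unfolding Z_def by auto
      then have "has_singleton_2x2 D E P"
        using singleton_from[of a1 D a2 b E b' P] that b' unfolding Z_def by auto
      with ns show False by simp
    qed
  qed
  have lam: "Z a1 = Z a2" if "a1 \<in> D" "a2 \<in> D" "b \<in> Z a1" "b \<in> Z a2" for a1 a2 b
    using half[OF that] half[of a2 a1 b] that by blast
  define lab2 where "lab2 b = (if \<exists>a\<in>D. b \<in> Z a then Some (Z (SOME a. a \<in> D \<and> b \<in> Z a)) else None)" for b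
  have "\<forall>a\<in>D. \<forall>b\<in>E. (P a b \<longleftrightarrow> Some (Z a) \<noteq> lab2 b)"
  proof (intro ballI)
    fix a b assume a: "a \<in> D" and b: "b \<in> E"
    show "P a b \<longleftrightarrow> Some (Z a) \<noteq> lab2 b"
    proof
      assume Pab: "P a b"
      show "Some (Z a) \<noteq> lab2 b"
      proof
        assume eq: "Some (Z a) = lab2 b"
        then have ex: "\<exists>a\<in>D. b \<in> Z a" unfolding lab2_def by (auto split: if_splits)
        define a' where "a' = (SOME a. a \<in> D \<and> b \<in> Z a)"
        have a': "a' \<in> D \<and> b \<in> Z a'" unfolding a'_def using someI_ex[of "\<lambda>a. a \<in> D \<and> b \<in> Z a"] ex by blast
        have "Z a = Z a'" using eq ex unfolding lab2_def a'_def by simp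
        then have "b \<in> Z a" using a' by simp
        then show False using Pab unfolding Z_def by simp
      qed
    next
      assume "Some (Z a) \<noteq> lab2 b"
      show "P a b"
      proof (rule ccontr)
        assume nP: "\<not> P a b"
        then have ba: "b \<in> Z a" unfolding Z_def using b by simp
        then have ex: "\<exists>a\<in>D. b \<in> Z a" using a by blast
        define a' where "a' = (SOME a. a \<in> D \<and> b \<in> Z a)"
        have a': "a' \<in> D \<and> b \<in> Z a'" unfolding a'_def using someI_ex[of "\<lambda>a. a \<in> D \<and> b \<in> Z a"] ex by blast
        have "lab2 b = Some (Z a')" unfolding lab2_def a'_def using ex by simp
        also have "Z a' = Z a" using lam a' a ba by blast
        finally show False using \<open>Some (Z a) \<noteq> lab2 b\<close> by simp
      qed
    qed
  qed
  then have "\<forall>a\<in>D. \<forall>b\<in>E. (P a b \<longleftrightarrow> (\<lambda>a. Some (Z a)) a \<noteq> lab2 b)" by simp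
  then show ?thesis by (rule exI[of _ lab2, THEN exI[of _ "\<lambda>a. Some (Z a)"]])
qed

definition emb :: "'v \<times> 'v \<Rightarrow> ('v \<times> bool) \<times> ('v \<times> bool)" where
  "emb x = ((fst x, False), (snd x, True))"

lemma inj_emb: "inj emb"
  unfolding emb_def inj_def by auto

lemma val_as_Q:
  fixes A :: "'v \<Rightarrow> 'a" and lab1 lab2 :: "'a \<Rightarrow> 'l"
  assumes V: "finite V" and CV: "C \<subseteq> V \<times> V"
    and valid: "\<forall>x\<in>C. A (fst x) \<in> D \<and> A (snd x) \<in> E"
    and lab: "\<forall>a\<in>D. \<forall>b\<in>E. (P a b \<longleftrightarrow> lab1 a \<noteq> lab2 b)"
    and om: "\<forall>x\<in>C. om' (emb x) = om x"
  defines "L \<equiv> (lab1 \<circ> A) ` V \<union> (lab2 \<circ> A) ` V"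
  defines "y \<equiv> (\<lambda>c (v, t). if t then (if lab2 (A v) = c then 1 else 0) else (if lab1 (A v) = c then (1::real) else 0))"
  shows "(\<Sum>c\<in>L. Qf (emb ` C) om' (y c)) = 2 * csp_val P C om A"
proof -
  have fL: "finite L" unfolding L_def using V by simp
  have fC: "finite C" using V CV by (meson finite_SigmaI finite_subset)
  have "(\<Sum>c\<in>L. Qf (emb ` C) om' (y c)) = (\<Sum>c\<in>L. \<Sum>x\<in>C. om x * (y c (fst x, False) - y c (snd x, True))^2)"
  proof (rule sum.cong)
    fix c assume "c \<in> L"
    have "Qf (emb ` C) om' (y c) = (\<Sum>x\<in>C. om' (emb x) * (y c (fst (emb x)) - y c (snd (emb x)))^2)"
      unfolding Qf_def
      using sum.reindex[OF inj_on_subset[OF inj_emb subset_UNIV], of "\<lambda>e. om' e * (y c (fst e) - y c (snd e))^2" C]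
      by (simp add: o_def)
    also have "\<dots> = (\<Sum>x\<in>C. om x * (y c (fst x, False) - y c (snd x, True))^2)"
      by (rule sum.cong) (use om in \<open>auto simp: emb_def\<close>)
    finally show "Qf (emb ` C) om' (y c) = (\<Sum>x\<in>C. om x * (y c (fst x, False) - y c (snd x, True))^2)" .
  qed simp
  also have "\<dots> = (\<Sum>x\<in>C. \<Sum>c\<in>L. om x * (y c (fst x, False) - y c (snd x, True))^2)"
    by (rule sum.swap)
  also have "\<dots> = (\<Sum>x\<in>C. 2 * (om x * (if P (A (fst x)) (A (snd x)) then 1 else 0)))"
  proof (rule sum.cong)
    fix x assume x: "x \<in> C"
    have inV: "fst x \<in> V" "snd x \<in> V" using x CV by auto
    have p: "lab1 (A (fst x)) \<in> L" "lab2 (A (snd x)) \<in> L" unfolding L_def using inV by auto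
    have "(\<Sum>c\<in>L. om x * (y c (fst x, False) - y c (snd x, True))^2) =
        om x * (\<Sum>c\<in>L. ((if lab1 (A (fst x)) = c then 1 else 0) - (if lab2 (A (snd x)) = c then 1 else 0))^2)"
      unfolding y_def by (simp add: sum_distrib_left)
    also have "\<dots> = om x * (if lab1 (A (fst x)) = lab2 (A (snd x)) then 0 else 2)"
      using sq_ind[OF fL p] by simp
    also have "\<dots> = 2 * (om x * (if P (A (fst x)) (A (snd x)) then 1 else 0))"
      using lab valid x by auto
    finally show "(\<Sum>c\<in>L. om x * (y c (fst x, False) - y c (snd x, True))^2) =
        2 * (om x * (if P (A (fst x)) (A (snd x)) then 1 else 0))" .
  qed simp
  also have "\<dots> = 2 * csp_val P C om A"
    unfolding csp_val_def by (simp add: sum_distrib_left case_prod_beta)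
  finally show ?thesis .
qed

lemma part2:
  fixes D E :: "'a set" and P :: "'a \<Rightarrow> 'a \<Rightarrow> bool"
  assumes ns: "\<not> has_singleton_2x2 D E P"
  shows "\<exists>K::real. K > 0 \<and> (\<forall>\<epsilon>::real. 0 < \<epsilon> \<and> \<epsilon> < 1 \<longrightarrow>
             (\<forall>(V::'v set) Cs w. csp_instance V Cs w \<longrightarrow>
                (\<exists>Cs' w'. is_sparsifier D E P \<epsilon> V Cs w Cs' w' \<and>
                   real (card Cs') \<le> K * real (card V) / \<epsilon> ^ 2)))"
proof -
  obtain lab1 lab2 :: "'a \<Rightarrow> 'a set option" where lab: "\<forall>a\<in>D. \<forall>b\<in>E. (P a b \<longleftrightarrow> lab1 a \<noteq> lab2 b)"
    using struct_nosingle[OF ns] by blast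
  show ?thesis
  proof (rule exI[of _ 38], intro conjI allI impI)
    show "(38::real) > 0" by simp
  next
    fix \<epsilon> :: real and V :: "'v set" and Cs w
    assume e: "0 < \<epsilon> \<and> \<epsilon> < 1" and inst: "csp_instance V Cs w"
    have V: "finite V" and CsV: "Cs \<subseteq> V \<times> V" and wpos: "\<forall>c\<in>Cs. w c > 0"
      using inst unfolding csp_instance_def by auto
    define U where "U = V \<times> (UNIV :: bool set)"
    define F where "F = emb ` Cs"
    define wF where "wF e = w (fst (fst e), fst (snd e))" for e :: "('v \<times> bool) \<times> ('v \<times> bool)"
    have fU: "finite U" unfolding U_def using V by simp
    have FU: "F \<subseteq> U \<times> U" unfolding F_def U_def emb_def using CsV by auto
    have wFe: "wF (emb x) = w x" for x unfolding wF_def emb_def by simp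
    have wFpos: "\<forall>e\<in>F. wF e > 0" unfolding F_def using wpos wFe by auto
    obtain F' w'F where R1: "F' \<subseteq> F" and R2: "\<forall>e\<in>F'. w'F e > 0"
      and R3: "real (card F') \<le> 19 * real (card U) / \<epsilon>^2"
      and R4: "\<forall>y. (1 - \<epsilon>) * Qf F wF y \<le> Qf F' w'F y \<and> Qf F' w'F y \<le> (1 + \<epsilon>) * Qf F wF y"
      using csq[OF fU FU wFpos, of \<epsilon>] e by blast
    define Cs' where "Cs' = {x\<in>Cs. emb x \<in> F'}"
    define w' where "w' x = w'F (emb x)" for x
    have sub: "Cs' \<subseteq> Cs" unfolding Cs'_def by auto
    have embCs': "emb ` Cs' = F'" unfolding Cs'_def using R1 unfolding F_def by auto
    have cCs': "card Cs' = card F'"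
      using card_image[OF inj_on_subset[OF inj_emb subset_UNIV], of Cs'] embCs' by simp
    have cU: "card U = 2 * card V" unfolding U_def by (simp add: card_cartesian_product)
    show "\<exists>Cs' w'. is_sparsifier D E P \<epsilon> V Cs w Cs' w' \<and> real (card Cs') \<le> 38 * real (card V) / \<epsilon> ^ 2"
    proof (rule exI[of _ Cs'], rule exI[of _ w'], intro conjI)
      show "real (card Cs') \<le> 38 * real (card V) / \<epsilon> ^ 2" using R3 cCs' cU by simp
      show "is_sparsifier D E P \<epsilon> V Cs w Cs' w'"
        unfolding is_sparsifier_def
      proof (intro conjI allI impI ballI)
        show "Cs' \<subseteq> Cs" by (rule sub)
      next
        fix c assume "c \<in> Cs'" then show "w' c > 0" unfolding w'_def Cs'_def using R2 by auto
      next
        fix A assume va: "valid_assignment D E V Cs A"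
        have valid: "\<forall>x\<in>Cs. A (fst x) \<in> D \<and> A (snd x) \<in> E" using va unfolding valid_assignment_def by auto
        have valid': "\<forall>x\<in>Cs'. A (fst x) \<in> D \<and> A (snd x) \<in> E" using valid sub by auto
        have Cs'V: "Cs' \<subseteq> V \<times> V" using sub CsV by auto
        define L where "L = (lab1 \<circ> A) ` V \<union> (lab2 \<circ> A) ` V"
        define y where "y = (\<lambda>c (v, t). if t then (if lab2 (A v) = c then 1 else 0) else (if lab1 (A v) = c then (1::real) else 0))"
        have S1: "(\<Sum>c\<in>L. Qf F wF (y c)) = 2 * csp_val P Cs w A"
          unfolding F_def L_def y_def by (rule val_as_Q[OF V CsV valid lab]) (simp add: wFe)
        have S2: "(\<Sum>c\<in>L. Qf F' w'F (y c)) = 2 * csp_val P Cs' w' A"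
          unfolding embCs'[symmetric] L_def y_def by (rule val_as_Q[OF V Cs'V valid' lab]) (simp add: w'_def)
        have "(\<Sum>c\<in>L. (1 - \<epsilon>) * Qf F wF (y c)) \<le> (\<Sum>c\<in>L. Qf F' w'F (y c))"
          by (rule sum_mono) (use R4 in blast)
        then have lo: "(1 - \<epsilon>) * (2 * csp_val P Cs w A) \<le> 2 * csp_val P Cs' w' A"
          unfolding S1[symmetric] S2[symmetric] by (simp add: sum_distrib_left)
        have "(\<Sum>c\<in>L. Qf F' w'F (y c)) \<le> (\<Sum>c\<in>L. (1 + \<epsilon>) * Qf F wF (y c))"
          by (rule sum_mono) (use R4 in blast)
        then have hi: "2 * csp_val P Cs' w' A \<le> (1 + \<epsilon>) * (2 * csp_val P Cs w A)"
          unfolding S1[symmetric] S2[symmetric] by (simp add: sum_distrib_left)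
        show "(1 - \<epsilon>) * csp_val P Cs w A \<le> csp_val P Cs' w' A" using lo by simp
        show "csp_val P Cs' w' A \<le> (1 + \<epsilon>) * csp_val P Cs w A" using hi by simp
      qed
    qed
  qed
qed

theorem theorem10:
  fixes D E :: "'a set" and P :: "'a \<Rightarrow> 'a \<Rightarrow> bool"
  assumes "finite D" "finite E" "card D \<ge> 2" "card E \<ge> 2"
  shows "(has_singleton_2x2 D E P \<longrightarrow>
           (\<forall>\<epsilon>::real. 0 < \<epsilon> \<and> \<epsilon> < 1 \<longrightarrow>
             (\<exists>c::real. c > 0 \<and> (\<forall>N::nat. \<exists>n\<ge>N. \<exists>(V::nat set) Cs w.
                 card V = n \<and> csp_instance V Cs w \<and>
                 (\<forall>Cs' w'. is_sparsifier D E P \<epsilon> V Cs w Cs' w' \<longrightarrow>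
                     real (card Cs') \<ge> c * real n ^ 2)))))
       \<and> (\<not> has_singleton_2x2 D E P \<longrightarrow>
           (\<exists>K::real. K > 0 \<and> (\<forall>\<epsilon>::real. 0 < \<epsilon> \<and> \<epsilon> < 1 \<longrightarrow>
             (\<forall>(V::'v set) Cs w. csp_instance V Cs w \<longrightarrow>
                (\<exists>Cs' w'. is_sparsifier D E P \<epsilon> V Cs w Cs' w' \<and>
                   real (card Cs') \<le> K * real (card V) / \<epsilon> ^ 2)))))"
proof (intro conjI impI allI)
  fix \<epsilon> :: real
  assume "has_singleton_2x2 D E P" and "0 < \<epsilon> \<and> \<epsilon> < 1"
  then show "\<exists>c::real. c > 0 \<and> (\<forall>N::nat. \<exists>n\<ge>N. \<exists>(V::nat set) Cs w.
                 card V = n \<and> csp_instance V Cs w \<and>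
                 (\<forall>Cs' w'. is_sparsifier D E P \<epsilon> V Cs w Cs' w' \<longrightarrow>
                     real (card Cs') \<ge> c * real n ^ 2))"
    using part1 by blast
next
  assume "\<not> has_singleton_2x2 D E P"
  then show "\<exists>K::real. K > 0 \<and> (\<forall>\<epsilon>::real. 0 < \<epsilon> \<and> \<epsilon> < 1 \<longrightarrow>
             (\<forall>(V::'v set) Cs w. csp_instance V Cs w \<longrightarrow>
                (\<exists>Cs' w'. is_sparsifier D E P \<epsilon> V Cs w Cs' w' \<and>
                   real (card Cs') \<le> K * real (card V) / \<epsilon> ^ 2)))"
    by (rule part2)
qed

end
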